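(* Let $\mu\in\mathbb{R}$, $\sigma>0$, and let $0<\alpha<\beta<1$, $0\le h_1\le h_2<1$. Put $k_1=\frac{h_2-h_1}{\beta-\alpha}$, $k_2=\frac{h_1}{1-\beta}$, $k_3=\frac{1-h_2}{\alpha}$. Then: (i) If ($k_2\ge k_1$ and $h_2\ge 1-\alpha$) or ($\max\{k_2,k_3\}<k_1$ and $k_2\ge 1$), then $\inf_{X\in V(\mu,\sigma)}\rho_{\mathcal{K}^{h_1,h_2}_{\beta,\alpha}}[X]=\mu$. (ii) If $k_2\ge k_1$ and $h_2<1-\alpha$, then $\inf_{X\in V(\mu,\sigma)}\rho_{\mathcal{K}^{h_1,h_2}_{\beta,\alpha}}[X]=\mu+\sigma\frac{h_2-1+\alpha}{\sqrt{\alpha(1-\alpha)}}$. (iii) If $k_3>k_1>k_2$, then $\inf_{X\in V(\mu,\sigma)}\rho_{\mathcal{K}^{h_1,h_2}_{\beta,\alpha}}[X]=\mu-\sigma\sqrt{\xi}$, where $$\xi=\frac{(1-h_2-\alpha)^2}{\alpha}+\frac{(h_2-h_1-\beta+\alpha)^2}{\beta-\alpha}+\frac{(h_1-1+\beta)^2}{1-\beta}.$$ (iv) If $k_3=k_1>k_2$, or if $\max\{k_2,k_3\}<k_1$ and $k_2<1$, then $\inf_{X\in V(\mu,\sigma)}\rho_{\mathcal{K}^{h_1,h_2}_{\beta,\alpha}}[X]=\mu+\sigma\frac{h_1-1+\beta}{\sqrt{\beta(1-\beta)}}$.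
   Context: All random variables are square-integrable on a common probability space. For a distortion function $h$ (nondecreasing on $[0,1]$ with $h(0)=0$, $h(1)=1$) the distortion risk measure of $X$ is the Choquet integral $\rho_h[X]=\int_0^\infty h(\bar F_X(x))\,dx+\int_{-\infty}^0\big(h(\bar F_X(x))-1\big)\,dx$, where $\bar F_X(x)=\mathbb{P}(X>x)$. For $0<\alpha<\beta<1$ and $0\le h_1\le h_2<1$, the GlueVaR distortion function is $\mathcal{K}^{h_1,h_2}_{\beta,\alpha}(p)=\frac{h_1p}{1-\beta}$ for $p\in[0,1-\beta)$, $\mathcal{K}^{h_1,h_2}_{\beta,\alpha}(p)=h_1+\frac{(h_2-h_1)(p-(1-\beta))}{\beta-\alpha}$ for $p\in[1-\beta,1-\alpha)$, and $\mathcal{K}^{h_1,h_2}_{\beta,\alpha}(p)=1$ for $p\in[1-\alpha,1]$. $V(\mu,\sigma)$ denotes the set of random variables $X$ with $\mathbb{E}X=\mu$ and $\mathrm{Var}(X)=\sigma^2$. *)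

theory Defs
  imports "HOL-Probability.Probability"
begin

definition distortion_rm :: "'a measure \<Rightarrow> (real \<Rightarrow> real) \<Rightarrow> ('a \<Rightarrow> real) \<Rightarrow> real" where
  "distortion_rm M h X =
     (LINT x:{0..}|lborel. h (measure M {\<omega> \<in> space M. X \<omega> > x}))
   + (LINT x:{..<0}|lborel. h (measure M {\<omega> \<in> space M. X \<omega> > x}) - 1)"

definition gluevar :: "real \<Rightarrow> real \<Rightarrow> real \<Rightarrow> real \<Rightarrow> real \<Rightarrow> real" where
  "gluevar h1 h2 \<beta> \<alpha> p =
     (if p < 1 - \<beta> then h1 * p / (1 - \<beta>)
      else if p < 1 - \<alpha> then h1 + (h2 - h1) * (p - (1 - \<beta>)) / (\<beta> - \<alpha>)
      else 1)"

definition Vset :: "'a measure \<Rightarrow> real \<Rightarrow> real \<Rightarrow> ('a \<Rightarrow> real) set" where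
  "Vset M \<mu> \<sigma> = {X. X \<in> borel_measurable M \<and> integrable M (\<lambda>\<omega>. (X \<omega>)\<^sup>2)
      \<and> (\<integral>\<omega>. X \<omega> \<partial>M) = \<mu> \<and> (\<integral>\<omega>. (X \<omega> - \<mu>)\<^sup>2 \<partial>M) = \<sigma>\<^sup>2}"

definition atomless :: "'a measure \<Rightarrow> bool" where
  "atomless M \<longleftrightarrow> (\<forall>A\<in>sets M. measure M A > 0 \<longrightarrow>
      (\<exists>B\<in>sets M. B \<subseteq> A \<and> 0 < measure M B \<and> measure M B < measure M A))"

end

theory Submission
  imports Defs
begin

lemma atomless_small:
  assumes P: "prob_space M" and AL: "atomless M" and A: "A \<in> sets M" "measure M A > 0" and d: "\<delta> > 0"
  shows "\<exists>B\<in>sets M. B \<subseteq> A \<and> 0 < measure M B \<and> measure M B \<le> \<delta>"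
proof -
  interpret prob_space M by fact
  have step: "\<exists>B\<in>sets M. B \<subseteq> A \<and> 0 < measure M B \<and> measure M B \<le> measure M A * (1/2)^n" for n
  proof (induction n)
    case 0 then show ?case using A by auto
  next
    case (Suc n)
    then obtain B where B: "B \<in> sets M" "B \<subseteq> A" "0 < measure M B" "measure M B \<le> measure M A * (1/2)^n" by blast
    from AL B obtain C where C: "C \<in> sets M" "C \<subseteq> B" "0 < measure M C" "measure M C < measure M B"
      unfolding atomless_def by blast
    have BC: "measure M (B - C) = measure M B - measure M C"
      using C B by (simp add: finite_measure_Diff)
    show ?case
    proof (cases "measure M C \<le> measure M B / 2")
      case True then show ?thesis using C B by (intro bexI[of _ C]) auto
    next
      case False then show ?thesis using C B BC by (intro bexI[of _ "B - C"]) auto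
    qed
  qed
  obtain n where n: "(1/2::real)^n < \<delta> / measure M A"
    using real_arch_pow_inv[of "\<delta> / measure M A" "1/2"] A d by auto
  then have "measure M A * (1/2)^n \<le> \<delta>" using A by (simp add: field_simps)
  moreover obtain B where "B \<in> sets M" "B \<subseteq> A" "0 < measure M B" "measure M B \<le> measure M A * (1/2)^n"
    using step[of n] by blast
  ultimately show ?thesis by (intro bexI[of _ B]) auto
qed

lemma atomless_exact:
  assumes P: "prob_space M" and AL: "atomless M" and A: "A \<in> sets M" and t: "0 \<le> t" "t \<le> measure M A"
  shows "\<exists>B\<in>sets M. B \<subseteq> A \<and> measure M B = t"
proof -
  interpret prob_space M by fact
  define adm where "adm B C \<longleftrightarrow> C \<in> sets M \<and> C \<subseteq> A - B \<and> measure M C \<le> t - measure M B" for B C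
  define sp where "sp B = Sup (measure M ` {C. adm B C})" for B
  define nx where "nx B = (SOME C. adm B C \<and> sp B / 2 \<le> measure M C)" for B
  have bdd: "bdd_above (measure M ` {C. adm B C})" for B
    by (rule bdd_aboveI[of _ 1]) auto
  have nx: "adm B (nx B) \<and> sp B / 2 \<le> measure M (nx B)" if "measure M B \<le> t" for B
  proof -
    have e: "adm B {}" using that unfolding adm_def by auto
    have "\<exists>C. adm B C \<and> sp B / 2 \<le> measure M C"
    proof (cases "sp B \<le> 0")
      case True then show ?thesis using e by (intro exI[of _ "{}"]) auto
    next
      case False
      then have "sp B / 2 < Sup (measure M ` {C. adm B C})" unfolding sp_def by simp
      then obtain y where "y \<in> measure M ` {C. adm B C}" "sp B / 2 < y"
        using e by (subst (asm) less_cSup_iff[OF _ bdd]) auto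
      then show ?thesis by force
    qed
    then show ?thesis unfolding nx_def by (rule someI_ex)
  qed
  define Bs where "Bs = rec_nat {} (\<lambda>_ B. B \<union> nx B)"
  have Bs0: "Bs 0 = {}" and BsS: "Bs (Suc n) = Bs n \<union> nx (Bs n)" for n
    unfolding Bs_def by simp_all
  have inv: "Bs n \<in> sets M \<and> Bs n \<subseteq> A \<and> measure M (Bs n) \<le> t" for n
  proof (induction n)
    case 0 then show ?case using t by (simp add: Bs0)
  next
    case (Suc n)
    then have N: "adm (Bs n) (nx (Bs n))" using nx by blast
    then have "measure M (Bs n \<union> nx (Bs n)) = measure M (Bs n) + measure M (nx (Bs n))"
      using Suc unfolding adm_def by (intro finite_measure_Union) auto
    then show ?case using N Suc unfolding adm_def BsS by auto
  qed
  have msuc: "measure M (Bs (Suc n)) = measure M (Bs n) + measure M (nx (Bs n))" for n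
  proof -
    have N: "adm (Bs n) (nx (Bs n))" using nx inv by blast
    then show ?thesis unfolding BsS
      using inv[of n] unfolding adm_def by (intro finite_measure_Union) auto
  qed
  have inc: "incseq Bs" unfolding incseq_Suc_iff BsS by auto
  define B where "B = (\<Union>n. Bs n)"
  have Bsets: "B \<in> sets M" unfolding B_def using inv by auto
  have BA: "B \<subseteq> A" unfolding B_def using inv by auto
  have lim: "(\<lambda>n. measure M (Bs n)) \<longlonglongrightarrow> measure M B"
    unfolding B_def using inv inc by (intro finite_Lim_measure_incseq) auto
  have Ble: "measure M B \<le> t"
    using lim inv by (intro LIMSEQ_le_const2) auto
  have Bn_le: "measure M (Bs n) \<le> measure M B" for n
    unfolding B_def using inv by (intro finite_measure_mono) auto
  have lim0: "(\<lambda>n. measure M (nx (Bs n))) \<longlonglongrightarrow> 0"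
  proof -
    have "(\<lambda>n. measure M (Bs (Suc n)) - measure M (Bs n)) \<longlonglongrightarrow> measure M B - measure M B"
      using lim by (intro tendsto_diff LIMSEQ_Suc)
    then show ?thesis using msuc by simp
  qed
  show ?thesis
  proof (rule ccontr)
    assume nB: "\<not> ?thesis"
    then have lt: "measure M B < t" using Ble Bsets BA by force
    have "measure M (A - B) = measure M A - measure M B"
      using A Bsets BA by (simp add: finite_measure_Diff)
    then have pos: "measure M (A - B) > 0" using lt t by simp
    obtain C where C: "C \<in> sets M" "C \<subseteq> A - B" "0 < measure M C" "measure M C \<le> t - measure M B"
      using atomless_small[OF P AL _ pos, of "t - measure M B"] A Bsets lt by auto
    have "measure M C / 2 \<le> measure M (nx (Bs n))" for n
    proof -
      have "adm (Bs n) C" unfolding adm_def using C Bn_le[of n] B_def by auto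
      then have "measure M C \<le> sp (Bs n)" unfolding sp_def by (intro cSup_upper bdd) auto
      then show ?thesis using nx[of "Bs n"] inv[of n] by auto
    qed
    moreover have "eventually (\<lambda>n. measure M (nx (Bs n)) < measure M C / 2) sequentially"
      using lim0 C by (intro order_tendstoD) auto
    then obtain n where "measure M (nx (Bs n)) < measure M C / 2" by (auto dest: eventually_happens)
    ultimately show False by (meson not_le)
  qed
qed


definition surv :: "'a measure \<Rightarrow> ('a \<Rightarrow> real) \<Rightarrow> real \<Rightarrow> real" where
  "surv M X x = measure M {\<omega> \<in> space M. X \<omega> > x}"

lemma surv_01:
  assumes "prob_space M" shows "0 \<le> surv M X x" "surv M X x \<le> 1"
proof -
  interpret prob_space M by fact
  show "0 \<le> surv M X x" "surv M X x \<le> 1" unfolding surv_def by auto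
qed

lemma surv_antimono:
  assumes "prob_space M" "X \<in> borel_measurable M" "x \<le> y"
  shows "surv M X y \<le> surv M X x"
proof -
  interpret prob_space M by fact
  show ?thesis unfolding surv_def using assms
    by (intro finite_measure_mono) auto
qed

lemma surv_borel:
  assumes "prob_space M" "X \<in> borel_measurable M"
  shows "surv M X \<in> borel_measurable borel"
proof -
  have "mono (\<lambda>x. - surv M X x)" unfolding mono_def using surv_antimono[OF assms] by auto
  then have "(\<lambda>x. - surv M X x) \<in> borel_measurable borel" by (rule borel_measurable_mono)
  then have "(\<lambda>x. - (- surv M X x)) \<in> borel_measurable borel" by measurable
  then show ?thesis by simp
qed

lemma one_minus_surv:
  assumes "prob_space M" "X \<in> borel_measurable M"
  shows "1 - surv M X x = measure M {\<omega> \<in> space M. X \<omega> \<le> x}"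
proof -
  interpret prob_space M by fact
  have "{\<omega> \<in> space M. X \<omega> \<le> x} = space M - {\<omega> \<in> space M. X \<omega> > x}" by auto
  then show ?thesis unfolding surv_def using assms by (simp add: prob_compl)
qed

lemma layer_U:
  assumes P: "prob_space M" and X[measurable]: "X \<in> borel_measurable M" and I: "integrable M X"
  shows "integrable lborel (\<lambda>x. indicator {d..} x * surv M X x)"
    and "(\<integral>x. indicator {d..} x * surv M X x \<partial>lborel) = (\<integral>\<omega>. max (X \<omega> - d) 0 \<partial>M)"
proof -
  interpret prob_space M by fact
  interpret pair_sigma_finite M lborel ..
  define F where "F = (\<lambda>\<omega> x. if d \<le> x \<and> x < X \<omega> then 1 else (0::ennreal))"
  have Fm: "case_prod F \<in> borel_measurable (M \<Otimes>\<^sub>M lborel)" unfolding F_def by measurable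
  have in1: "(\<integral>\<^sup>+\<omega>. F \<omega> x \<partial>M) = ennreal (indicator {d..} x * surv M X x)" for x
  proof (cases "d \<le> x")
    case True
    have "(\<integral>\<^sup>+\<omega>. F \<omega> x \<partial>M) = (\<integral>\<^sup>+\<omega>. indicator {\<omega> \<in> space M. X \<omega> > x} \<omega> \<partial>M)"
      unfolding F_def using True by (intro nn_integral_cong) (auto simp: indicator_def)
    also have "\<dots> = emeasure M {\<omega> \<in> space M. X \<omega> > x}" by (intro nn_integral_indicator) measurable
    also have "\<dots> = ennreal (surv M X x)" unfolding surv_def by (simp add: emeasure_eq_measure)
    finally show ?thesis using True by simp
  next
    case False then show ?thesis unfolding F_def by simp
  qed
  have in2: "(\<integral>\<^sup>+x. F \<omega> x \<partial>lborel) = ennreal (max (X \<omega> - d) 0)" for \<omega>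
  proof (cases "d \<le> X \<omega>")
    case True
    have "(\<integral>\<^sup>+x. F \<omega> x \<partial>lborel) = (\<integral>\<^sup>+x. indicator {d..<X \<omega>} x \<partial>lborel)"
      unfolding F_def by (intro nn_integral_cong) (auto simp: indicator_def)
    also have "\<dots> = ennreal (X \<omega> - d)" using True by simp
    finally show ?thesis using True by simp
  next
    case False
    then have "F \<omega> x = 0" for x unfolding F_def by auto
    then show ?thesis using False by simp
  qed
  have Ig: "integrable M (\<lambda>\<omega>. max (X \<omega> - d) 0)"
    by (rule Bochner_Integration.integrable_bound[where f="\<lambda>\<omega>. \<bar>X \<omega>\<bar> + \<bar>d\<bar>"]) (auto intro!: I integrable_add)
  have "(\<integral>\<^sup>+x. ennreal (indicator {d..} x * surv M X x) \<partial>lborel) = (\<integral>\<^sup>+x. \<integral>\<^sup>+\<omega>. F \<omega> x \<partial>M \<partial>lborel)"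
    using in1 by simp
  also have "\<dots> = (\<integral>\<^sup>+\<omega>. \<integral>\<^sup>+x. F \<omega> x \<partial>lborel \<partial>M)" by (rule Fubini'[OF Fm])
  also have "\<dots> = (\<integral>\<^sup>+\<omega>. ennreal (max (X \<omega> - d) 0) \<partial>M)" using in2 by simp
  also have "\<dots> = ennreal (\<integral>\<omega>. max (X \<omega> - d) 0 \<partial>M)"
    using Ig by (intro nn_integral_eq_integral) auto
  finally have nn: "(\<integral>\<^sup>+x. ennreal (indicator {d..} x * surv M X x) \<partial>lborel) = ennreal (\<integral>\<omega>. max (X \<omega> - d) 0 \<partial>M)" .
  have mS: "(\<lambda>x. indicator {d..} x * surv M X x) \<in> borel_measurable lborel"
    using surv_borel[OF P X] by measurable
  have "integrable lborel (\<lambda>x. indicator {d..} x * surv M X x) \<and>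
      (\<integral>x. indicator {d..} x * surv M X x \<partial>lborel) = (\<integral>\<omega>. max (X \<omega> - d) 0 \<partial>M)"
    using nn_integral_eq_integrable[OF mS, of "\<integral>\<omega>. max (X \<omega> - d) 0 \<partial>M"] nn surv_01[OF P]
    by (auto intro!: integral_nonneg_AE)
  then show "integrable lborel (\<lambda>x. indicator {d..} x * surv M X x)"
    "(\<integral>x. indicator {d..} x * surv M X x \<partial>lborel) = (\<integral>\<omega>. max (X \<omega> - d) 0 \<partial>M)" by auto
qed

lemma layer_V:
  assumes P: "prob_space M" and X[measurable]: "X \<in> borel_measurable M" and I: "integrable M X"
  shows "integrable lborel (\<lambda>x. indicator {..<d} x * (1 - surv M X x))"
    and "(\<integral>x. indicator {..<d} x * (1 - surv M X x) \<partial>lborel) = (\<integral>\<omega>. max (d - X \<omega>) 0 \<partial>M)"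
proof -
  interpret prob_space M by fact
  interpret pair_sigma_finite M lborel ..
  define F where "F = (\<lambda>\<omega> x. if x < d \<and> X \<omega> \<le> x then 1 else (0::ennreal))"
  have Fm: "case_prod F \<in> borel_measurable (M \<Otimes>\<^sub>M lborel)" unfolding F_def by measurable
  have in1: "(\<integral>\<^sup>+\<omega>. F \<omega> x \<partial>M) = ennreal (indicator {..<d} x * (1 - surv M X x))" for x
  proof (cases "x < d")
    case True
    have "(\<integral>\<^sup>+\<omega>. F \<omega> x \<partial>M) = (\<integral>\<^sup>+\<omega>. indicator {\<omega> \<in> space M. X \<omega> \<le> x} \<omega> \<partial>M)"
      unfolding F_def using True by (intro nn_integral_cong) (auto simp: indicator_def)
    also have "\<dots> = emeasure M {\<omega> \<in> space M. X \<omega> \<le> x}" by (intro nn_integral_indicator) measurable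
    also have "\<dots> = ennreal (1 - surv M X x)" using one_minus_surv[OF P X] by (simp add: emeasure_eq_measure)
    finally show ?thesis using True by simp
  next
    case False then show ?thesis unfolding F_def by simp
  qed
  have in2: "(\<integral>\<^sup>+x. F \<omega> x \<partial>lborel) = ennreal (max (d - X \<omega>) 0)" for \<omega>
  proof (cases "X \<omega> \<le> d")
    case True
    have "(\<integral>\<^sup>+x. F \<omega> x \<partial>lborel) = (\<integral>\<^sup>+x. indicator {X \<omega>..<d} x \<partial>lborel)"
      unfolding F_def by (intro nn_integral_cong) (auto simp: indicator_def)
    also have "\<dots> = ennreal (d - X \<omega>)" using True by simp
    finally show ?thesis using True by simp
  next
    case False
    then have "F \<omega> x = 0" for x unfolding F_def by auto
    then show ?thesis using False by simp
  qed
  have Ig: "integrable M (\<lambda>\<omega>. max (d - X \<omega>) 0)"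
    by (rule Bochner_Integration.integrable_bound[where f="\<lambda>\<omega>. \<bar>X \<omega>\<bar> + \<bar>d\<bar>"]) (auto intro!: I integrable_add)
  have "(\<integral>\<^sup>+x. ennreal (indicator {..<d} x * (1 - surv M X x)) \<partial>lborel) = (\<integral>\<^sup>+x. \<integral>\<^sup>+\<omega>. F \<omega> x \<partial>M \<partial>lborel)"
    using in1 by simp
  also have "\<dots> = (\<integral>\<^sup>+\<omega>. \<integral>\<^sup>+x. F \<omega> x \<partial>lborel \<partial>M)" by (rule Fubini'[OF Fm])
  also have "\<dots> = (\<integral>\<^sup>+\<omega>. ennreal (max (d - X \<omega>) 0) \<partial>M)" using in2 by simp
  also have "\<dots> = ennreal (\<integral>\<omega>. max (d - X \<omega>) 0 \<partial>M)"
    using Ig by (intro nn_integral_eq_integral) auto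
  finally have nn: "(\<integral>\<^sup>+x. ennreal (indicator {..<d} x * (1 - surv M X x)) \<partial>lborel) = ennreal (\<integral>\<omega>. max (d - X \<omega>) 0 \<partial>M)" .
  have mS: "(\<lambda>x. indicator {..<d} x * (1 - surv M X x)) \<in> borel_measurable lborel"
    using surv_borel[OF P X] by measurable
  have "integrable lborel (\<lambda>x. indicator {..<d} x * (1 - surv M X x)) \<and>
      (\<integral>x. indicator {..<d} x * (1 - surv M X x) \<partial>lborel) = (\<integral>\<omega>. max (d - X \<omega>) 0 \<partial>M)"
    using nn_integral_eq_integrable[OF mS, of "\<integral>\<omega>. max (d - X \<omega>) 0 \<partial>M"] nn surv_01[OF P]
    by (auto intro!: integral_nonneg_AE)
  then show "integrable lborel (\<lambda>x. indicator {..<d} x * (1 - surv M X x))"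
    "(\<integral>x. indicator {..<d} x * (1 - surv M X x) \<partial>lborel) = (\<integral>\<omega>. max (d - X \<omega>) 0 \<partial>M)" by auto
qed


lemma rho_decomp:
  assumes P: "prob_space M" and X[measurable]: "X \<in> borel_measurable M" and I: "integrable M X"
    and G: "\<forall>p\<in>{0..1}. 0 \<le> g p \<and> g p \<le> 1 \<and> g p \<le> K * p \<and> 1 - g p \<le> K * (1 - p)"
    and mono: "mono_on {0..1} g"
  shows "integrable lborel (\<lambda>x. g (surv M X x) - surv M X x)"
    and "distortion_rm M g X = (\<integral>\<omega>. X \<omega> \<partial>M) + (\<integral>x. g (surv M X x) - surv M X x \<partial>lborel)"
proof -
  interpret prob_space M by fact
  define S where "S = surv M X"
  have S01: "0 \<le> S x" "S x \<le> 1" for x unfolding S_def using surv_01[OF P] by auto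
  have K0: "0 \<le> K" using G by (metis atLeastAtMost_iff mult.right_neutral order_trans zero_le_one order_refl)
  have gS_anti: "g (S y) \<le> g (S x)" if "x \<le> y" for x y
    using mono S01 surv_antimono[OF P X that] unfolding S_def mono_on_def by auto
  have mgS: "(\<lambda>x. g (S x)) \<in> borel_measurable borel"
  proof -
    have "mono (\<lambda>x. - g (S x))" unfolding mono_def using gS_anti by auto
    then have "(\<lambda>x. - g (S x)) \<in> borel_measurable borel" by (rule borel_measurable_mono)
    then have "(\<lambda>x. - (- g (S x))) \<in> borel_measurable borel" by measurable
    then show ?thesis by simp
  qed
  have mS: "S \<in> borel_measurable borel" unfolding S_def using surv_borel[OF P X] .
  define f1 where "f1 x = indicator {0..} x * S x" for x :: real
  define f2 where "f2 x = indicator {..<0} x * (1 - S x)" for x :: real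
  have i1: "integrable lborel f1" and e1: "integral\<^sup>L lborel f1 = (\<integral>\<omega>. max (X \<omega> - 0) 0 \<partial>M)"
    unfolding f1_def S_def using layer_U[OF P X I, of 0] by auto
  have i2: "integrable lborel f2" and e2: "integral\<^sup>L lborel f2 = (\<integral>\<omega>. max (0 - X \<omega>) 0 \<partial>M)"
    unfolding f2_def S_def using layer_V[OF P X I, of 0] by auto
  define D where "D x = g (S x) - S x" for x
  have mD: "D \<in> borel_measurable lborel" unfolding D_def using mgS mS by measurable
  have Dbound: "norm (D x) \<le> norm ((K + 1) * (f1 x + f2 x))" for x
  proof -
    have g: "0 \<le> g (S x)" "g (S x) \<le> 1" "g (S x) \<le> K * S x" "1 - g (S x) \<le> K * (1 - S x)" using G S01[of x] by auto
    have a: "K * S x \<le> (K+1) * S x" "S x \<le> (K+1) * S x" "K * (1 - S x) \<le> (K+1) * (1 - S x)" "1 - S x \<le> (K+1) * (1 - S x)"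
      using K0 S01[of x] mult_left_le[of "S x" K] by (auto intro!: mult_right_mono simp: algebra_simps)
    have "f1 x + f2 x \<ge> 0" unfolding f1_def f2_def using S01[of x] by (auto simp: indicator_def)
    show ?thesis
    proof (cases "0 \<le> x")
      case True then have "f1 x + f2 x = S x" unfolding f1_def f2_def by simp
      then show ?thesis unfolding D_def using g a K0 S01[of x] by (simp add: abs_le_iff)
    next
      case False then have "f1 x + f2 x = 1 - S x" unfolding f1_def f2_def by simp
      then show ?thesis unfolding D_def using g a K0 S01[of x] by (simp add: abs_le_iff)
    qed
  qed
  have iD: "integrable lborel D"
    by (rule Bochner_Integration.integrable_bound[where f="\<lambda>x. (K + 1) * (f1 x + f2 x)"])
       (use i1 i2 mD Dbound in auto)
  then show "integrable lborel (\<lambda>x. g (surv M X x) - surv M X x)" unfolding D_def S_def .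
  have iDa: "integrable lborel (\<lambda>x. D x * indicator {0..} x)" "integrable lborel (\<lambda>x. D x * indicator {..<0} x)"
    using iD by (auto intro!: integrable_real_mult_indicator)
  have "distortion_rm M g X = (\<integral>x. f1 x + D x * indicator {0..} x \<partial>lborel)
        + (\<integral>x. D x * indicator {..<0} x - f2 x \<partial>lborel)"
  proof -
    have a: "(LINT x:{0..}|lborel. g (measure M {\<omega> \<in> space M. X \<omega> > x})) = (\<integral>x. f1 x + D x * indicator {0..} x \<partial>lborel)"
      unfolding set_lebesgue_integral_def
      by (rule Bochner_Integration.integral_cong) (auto simp: f1_def f2_def D_def S_def surv_def indicator_def)
    have b: "(LINT x:{..<0}|lborel. g (measure M {\<omega> \<in> space M. X \<omega> > x}) - 1) = (\<integral>x. D x * indicator {..<0} x - f2 x \<partial>lborel)"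
      unfolding set_lebesgue_integral_def
      by (rule Bochner_Integration.integral_cong) (auto simp: f1_def f2_def D_def S_def surv_def indicator_def)
    show ?thesis unfolding distortion_rm_def a b ..
  qed
  also have "\<dots> = (integral\<^sup>L lborel f1 + (\<integral>x. D x * indicator {0..} x \<partial>lborel))
        + ((\<integral>x. D x * indicator {..<0} x \<partial>lborel) - integral\<^sup>L lborel f2)"
    using i1 i2 iDa by simp
  finally have r1: "distortion_rm M g X = (integral\<^sup>L lborel f1 + (\<integral>x. D x * indicator {0..} x \<partial>lborel))
        + ((\<integral>x. D x * indicator {..<0} x \<partial>lborel) - integral\<^sup>L lborel f2)" .
  have "(\<integral>x. D x * indicator {0..} x \<partial>lborel) + (\<integral>x. D x * indicator {..<0} x \<partial>lborel)
      = (\<integral>x. D x * indicator {0..} x + D x * indicator {..<0} x \<partial>lborel)"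
    using iDa by simp
  also have "\<dots> = integral\<^sup>L lborel D"
    by (intro Bochner_Integration.integral_cong) (auto simp: indicator_def)
  finally have r2: "(\<integral>x. D x * indicator {0..} x \<partial>lborel) + (\<integral>x. D x * indicator {..<0} x \<partial>lborel) = integral\<^sup>L lborel D" .
  have r3: "integral\<^sup>L lborel f1 - integral\<^sup>L lborel f2 = (\<integral>\<omega>. X \<omega> \<partial>M)"
  proof -
    have ia: "integrable M (\<lambda>\<omega>. max (X \<omega> - 0) 0)" "integrable M (\<lambda>\<omega>. max (0 - X \<omega>) 0)"
      by (rule Bochner_Integration.integrable_bound[where f="\<lambda>\<omega>. \<bar>X \<omega>\<bar>"]; auto intro!: I)+
    have "(\<integral>\<omega>. max (X \<omega> - 0) 0 \<partial>M) - (\<integral>\<omega>. max (0 - X \<omega>) 0 \<partial>M) = (\<integral>\<omega>. max (X \<omega> - 0) 0 - max (0 - X \<omega>) 0 \<partial>M)"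
      using ia by simp
    also have "\<dots> = (\<integral>\<omega>. X \<omega> \<partial>M)" by (intro Bochner_Integration.integral_cong) auto
    finally show ?thesis using e1 e2 by simp
  qed
  from r1 r2 r3 show "distortion_rm M g X = (\<integral>\<omega>. X \<omega> \<partial>M) + (\<integral>x. g (surv M X x) - surv M X x \<partial>lborel)"
    unfolding D_def[symmetric] S_def[symmetric] by linarith
qed


lemma rho_lower:
  assumes P: "prob_space M" and X[measurable]: "X \<in> borel_measurable M" and I: "integrable M X"
    and G: "\<forall>p\<in>{0..1}. 0 \<le> g p \<and> g p \<le> 1 \<and> g p \<le> K * p \<and> 1 - g p \<le> K * (1 - p)"
    and mono: "mono_on {0..1} g"
    and H1: "\<forall>p\<in>{0..1}. g p - p \<ge> A * p"
    and H2: "\<forall>p\<in>{0..1}. g p - p \<ge> B0 * (1 - p) + B1 * p"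
    and H3: "\<forall>p\<in>{0..1}. g p - p \<ge> - Bm * (1 - p)"
    and d: "D2 \<le> D1"
  shows "distortion_rm M g X \<ge> (\<integral>\<omega>. X \<omega> \<partial>M) + (\<integral>\<omega>. A * max (X \<omega> - D1) 0
      + B1 * (max (X \<omega> - D2) 0 - max (X \<omega> - D1) 0) + B0 * (max (D1 - X \<omega>) 0 - max (D2 - X \<omega>) 0)
      - Bm * max (D2 - X \<omega>) 0 \<partial>M)"
proof -
  interpret prob_space M by fact
  define S where "S = surv M X"
  have S01: "0 \<le> S x" "S x \<le> 1" for x unfolding S_def using surv_01[OF P] by auto
  define u where "u c x = indicator {c..} x * S x" for c x :: real
  define v where "v c x = indicator {..<c} x * (1 - S x)" for c x :: real
  have iu: "integrable lborel (u c)" and eu: "integral\<^sup>L lborel (u c) = (\<integral>\<omega>. max (X \<omega> - c) 0 \<partial>M)" for c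
    unfolding u_def S_def using layer_U[OF P X I, of c] by auto
  have iv: "integrable lborel (v c)" and ev: "integral\<^sup>L lborel (v c) = (\<integral>\<omega>. max (c - X \<omega>) 0 \<partial>M)" for c
    unfolding v_def S_def using layer_V[OF P X I, of c] by auto
  have ia: "integrable M (\<lambda>\<omega>. max (X \<omega> - c) 0)" "integrable M (\<lambda>\<omega>. max (c - X \<omega>) 0)" for c
    by (rule Bochner_Integration.integrable_bound[where f="\<lambda>\<omega>. \<bar>X \<omega>\<bar> + \<bar>c\<bar>"]; auto intro!: I integrable_add)+
  define L where "L x = A * u D1 x + B1 * (u D2 x - u D1 x) + B0 * (v D1 x - v D2 x) - Bm * v D2 x" for x
  have iL: "integrable lborel L" unfolding L_def using iu iv by auto
  have eL: "integral\<^sup>L lborel L = (\<integral>\<omega>. A * max (X \<omega> - D1) 0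
      + B1 * (max (X \<omega> - D2) 0 - max (X \<omega> - D1) 0) + B0 * (max (D1 - X \<omega>) 0 - max (D2 - X \<omega>) 0)
      - Bm * max (D2 - X \<omega>) 0 \<partial>M)"
    unfolding L_def using iu iv ia by (simp add: eu ev)
  have DL: "L x \<le> g (S x) - S x" for x
  proof -
    have p: "S x \<in> {0..1}" using S01 by auto
    consider "D1 \<le> x" | "D2 \<le> x" "x < D1" | "x < D2" by linarith
    then show ?thesis
    proof cases
      case 1 then have "L x = A * S x" using d unfolding L_def u_def v_def by simp
      then show ?thesis using H1 p by auto
    next
      case 2 then have "L x = B0 * (1 - S x) + B1 * S x" using d unfolding L_def u_def v_def by simp
      then show ?thesis using H2 p by auto
    next
      case 3 then have "L x = - Bm * (1 - S x)" using d unfolding L_def u_def v_def by simp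
      then show ?thesis using H3 p by auto
    qed
  qed
  have dec: "distortion_rm M g X = (\<integral>\<omega>. X \<omega> \<partial>M) + (\<integral>x. g (S x) - S x \<partial>lborel)"
    and iD: "integrable lborel (\<lambda>x. g (S x) - S x)"
    using rho_decomp[OF P X I G mono] unfolding S_def by auto
  have "integral\<^sup>L lborel L \<le> (\<integral>x. g (S x) - S x \<partial>lborel)"
    using iL iD DL by (intro integral_mono) auto
  then show ?thesis using dec eL by simp
qed


lemma id1:
  fixes p1 p2 p3 m1 m2 m3 V c t :: real
  assumes "p1 + p2 + p3 = 1" "p1*m1 + p2*m2 + p3*m3 = 0" "V = p1*m1^2 + p2*m2^2 + p3*m3^2"
  shows "2*c*(m1*(t + c*(m1+m2)/2) + (m1*p1 + m2*(1-p1))*(c*(m3-m1)/2)) + c^2*V + t^2 = (t + c*m1)^2"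
  using assms by algebra

lemma id2:
  fixes p1 p2 p3 m1 m2 m3 V c t :: real
  assumes "p1 + p2 + p3 = 1" "p1*m1 + p2*m2 + p3*m3 = 0" "V = p1*m1^2 + p2*m2^2 + p3*m3^2"
  shows "2*c*((m1*p1 + m2*(1-p1))*(t + c*(m2+m3)/2) + (m1*p1 - m2*p1)*(- c*(m1+m2)/2 - t)) + c^2*V + t^2 = (t + c*m2)^2"
  using assms by algebra

lemma id3:
  fixes p1 p2 p3 m1 m2 m3 V c t :: real
  assumes "p1 + p2 + p3 = 1" "p1*m1 + p2*m2 + p3*m3 = 0" "V = p1*m1^2 + p2*m2^2 + p3*m3^2"
  shows "2*c*((m1*p1 - m2*p1)*(c*(m3-m1)/2) - m3*(- c*(m2+m3)/2 - t)) + c^2*V + t^2 = (t + c*m3)^2"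
  using assms by algebra

lemma phi_bound:
  fixes p1 p2 p3 m1 m2 m3 V c y \<mu> :: real
  assumes s: "p1 + p2 + p3 = 1" "p1*m1 + p2*m2 + p3*m3 = 0" "V = p1*m1^2 + p2*m2^2 + p3*m3^2"
    and m: "m1 \<le> m2" "m2 \<le> m3" and c: "c > 0"
  defines "D1 \<equiv> \<mu> - c*(m1+m2)/2" and "D2 \<equiv> \<mu> - c*(m2+m3)/2"
  shows "m1 * max (y - D1) 0 + (m1*p1 + m2*(1-p1)) * (max (y - D2) 0 - max (y - D1) 0)
      + (m1*p1 - m2*p1) * (max (D1 - y) 0 - max (D2 - y) 0) - m3 * max (D2 - y) 0
      \<ge> - c*V/2 - (y - \<mu>)^2/(2*c)"
proof -
  define t where "t = y - \<mu>"
  have y: "y = \<mu> + t" unfolding t_def by simp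
  have dd: "D2 \<le> D1" unfolding D1_def D2_def using m c by (simp add: field_simps mult_left_mono)
  define F where "F = m1 * max (y - D1) 0 + (m1*p1 + m2*(1-p1)) * (max (y - D2) 0 - max (y - D1) 0)
      + (m1*p1 - m2*p1) * (max (D1 - y) 0 - max (D2 - y) 0) - m3 * max (D2 - y) 0"
  have key: "\<exists>m. 2*c*F + c^2*V + t^2 = (t + c*m)^2"
  proof -
    consider "D1 \<le> y" | "D2 \<le> y" "y < D1" | "y < D2" by linarith
    then show ?thesis
    proof cases
      case 1
      then have "F = m1*(y - D1) + (m1*p1 + m2*(1-p1))*(D1 - D2)"
        using dd unfolding F_def by (simp add: max_def)
      also have "\<dots> = m1*(t + c*(m1+m2)/2) + (m1*p1 + m2*(1-p1))*(c*(m3-m1)/2)"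
        unfolding y D1_def D2_def by (simp add: field_simps)
      finally have "F = m1*(t + c*(m1+m2)/2) + (m1*p1 + m2*(1-p1))*(c*(m3-m1)/2)" .
      then show ?thesis using id1[OF s, of c t] by blast
    next
      case 2
      then have "F = (m1*p1 + m2*(1-p1))*(y - D2) + (m1*p1 - m2*p1)*(D1 - y)"
        using dd unfolding F_def by (simp add: max_def)
      also have "\<dots> = (m1*p1 + m2*(1-p1))*(t + c*(m2+m3)/2) + (m1*p1 - m2*p1)*(- c*(m1+m2)/2 - t)"
        unfolding y D1_def D2_def by (simp add: field_simps)
      finally have "F = (m1*p1 + m2*(1-p1))*(t + c*(m2+m3)/2) + (m1*p1 - m2*p1)*(- c*(m1+m2)/2 - t)" .
      then show ?thesis using id2[OF s, of c t] by blast
    next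
      case 3
      then have "F = (m1*p1 - m2*p1)*(D1 - D2) - m3*(D2 - y)"
        using dd unfolding F_def by (simp add: max_def)
      also have "\<dots> = (m1*p1 - m2*p1)*(c*(m3-m1)/2) - m3*(- c*(m2+m3)/2 - t)"
        unfolding y D1_def D2_def by (simp add: field_simps)
      finally have "F = (m1*p1 - m2*p1)*(c*(m3-m1)/2) - m3*(- c*(m2+m3)/2 - t)" .
      then show ?thesis using id3[OF s, of c t] by blast
    qed
  qed
  then have "2*c*F + c^2*V + t^2 \<ge> 0" by auto
  then have "F \<ge> - c*V/2 - t^2/(2*c)" using c by (simp add: field_simps power2_eq_square)
  then show ?thesis unfolding F_def t_def .
qed


lemma Vset_facts:
  assumes P: "prob_space M" and XV: "X \<in> Vset M \<mu> \<sigma>"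
  shows "X \<in> borel_measurable M" "integrable M X" "integrable M (\<lambda>\<omega>. (X \<omega> - \<mu>)^2)"
    "(\<integral>\<omega>. X \<omega> \<partial>M) = \<mu>" "(\<integral>\<omega>. (X \<omega> - \<mu>)^2 \<partial>M) = \<sigma>^2"
proof -
  interpret prob_space M by fact
  have m[measurable]: "X \<in> borel_measurable M" and i2: "integrable M (\<lambda>\<omega>. (X \<omega>)\<^sup>2)"
    using XV unfolding Vset_def by auto
  show "X \<in> borel_measurable M" by fact
  show iX: "integrable M X"
  proof (rule Bochner_Integration.integrable_bound[where f="\<lambda>\<omega>. 1 + (X \<omega>)\<^sup>2"])
    show "integrable M (\<lambda>\<omega>. 1 + (X \<omega>)\<^sup>2)" using i2 by auto
    show "AE x in M. norm (X x) \<le> norm (1 + (X x)\<^sup>2)"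
    proof (intro AE_I2)
      fix x
      have "\<bar>X x\<bar> \<le> 1 + (X x)^2"
      proof (cases "\<bar>X x\<bar> \<le> 1")
        case True then show ?thesis by (smt (verit) zero_le_power2)
      next
        case False then have "\<bar>X x\<bar> * 1 \<le> \<bar>X x\<bar> * \<bar>X x\<bar>" by (intro mult_left_mono) auto
        then show ?thesis by (simp add: power2_eq_square abs_mult_self_eq)
      qed
      then show "norm (X x) \<le> norm (1 + (X x)\<^sup>2)" by simp
    qed
  qed auto
  have "(\<lambda>\<omega>. (X \<omega> - \<mu>)^2) = (\<lambda>\<omega>. (X \<omega>)^2 - 2*\<mu>*X \<omega> + \<mu>^2)"
    by (auto simp: power2_eq_square algebra_simps)
  then show "integrable M (\<lambda>\<omega>. (X \<omega> - \<mu>)^2)" using i2 iX by auto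
  show "(\<integral>\<omega>. X \<omega> \<partial>M) = \<mu>" "(\<integral>\<omega>. (X \<omega> - \<mu>)^2 \<partial>M) = \<sigma>^2" using XV unfolding Vset_def by auto
qed

lemma core_lower:
  assumes P: "prob_space M" and XV: "X \<in> Vset M \<mu> \<sigma>" and sg: "\<sigma> > 0"
    and G: "\<forall>p\<in>{0..1}. 0 \<le> g p \<and> g p \<le> 1 \<and> g p \<le> K * p \<and> 1 - g p \<le> K * (1 - p)"
    and mono: "mono_on {0..1} g"
    and s: "p1 + p2 + p3 = 1" "p1*m1 + p2*m2 + p3*m3 = 0" "V = p1*m1^2 + p2*m2^2 + p3*m3^2"
    and m: "m1 \<le> m2" "m2 \<le> m3" and V0: "V > 0"
    and L1: "\<forall>p\<in>{0..1}. g p - p \<ge> m1 * p"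
    and L2: "\<forall>p\<in>{0..1}. g p - p \<ge> m1*p1 + m2*(p - p1)"
    and L3: "\<forall>p\<in>{0..1}. g p - p \<ge> m3 * (p - 1)"
  shows "distortion_rm M g X \<ge> \<mu> - \<sigma> * sqrt V"
proof -
  interpret prob_space M by fact
  note XF = Vset_facts[OF P XV]
  note Xm[measurable] = XF(1)
  define r where "r = sqrt V"
  have r0: "r > 0" and rV: "r^2 = V" unfolding r_def using V0 by auto
  define c where "c = \<sigma> / r"
  have c0: "c > 0" unfolding c_def using sg r0 by simp
  define D1 where "D1 = \<mu> - c*(m1+m2)/2"
  define D2 where "D2 = \<mu> - c*(m2+m3)/2"
  have dd: "D2 \<le> D1" unfolding D1_def D2_def using m c0 by (simp add: field_simps mult_left_mono)
  have H2: "\<forall>p\<in>{0..1}. g p - p \<ge> (m1*p1 - m2*p1) * (1 - p) + (m1*p1 + m2*(1-p1)) * p"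
  proof
    fix p :: real assume "p \<in> {0..1}"
    moreover have "(m1*p1 - m2*p1) * (1 - p) + (m1*p1 + m2*(1-p1)) * p = m1*p1 + m2*(p - p1)"
      by (simp add: algebra_simps)
    ultimately show "g p - p \<ge> (m1*p1 - m2*p1) * (1 - p) + (m1*p1 + m2*(1-p1)) * p" using L2 by auto
  qed
  have H3: "\<forall>p\<in>{0..1}. g p - p \<ge> - m3 * (1 - p)" using L3 by (auto simp: algebra_simps)
  define \<Phi> where "\<Phi> y = m1 * max (y - D1) 0 + (m1*p1 + m2*(1-p1)) * (max (y - D2) 0 - max (y - D1) 0)
      + (m1*p1 - m2*p1) * (max (D1 - y) 0 - max (D2 - y) 0) - m3 * max (D2 - y) 0" for y
  have low: "distortion_rm M g X \<ge> (\<integral>\<omega>. X \<omega> \<partial>M) + (\<integral>\<omega>. \<Phi> (X \<omega>) \<partial>M)"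
    using rho_lower[OF P XF(1) XF(2) G mono L1 H2 H3 dd] unfolding \<Phi>_def by simp
  have ia: "integrable M (\<lambda>\<omega>. max (X \<omega> - c) 0)" "integrable M (\<lambda>\<omega>. max (c - X \<omega>) 0)" for c
    by (rule Bochner_Integration.integrable_bound[where f="\<lambda>\<omega>. \<bar>X \<omega>\<bar> + \<bar>c\<bar>"]; auto intro!: XF(2) integrable_add)+
  have iPhi: "integrable M (\<lambda>\<omega>. \<Phi> (X \<omega>))" unfolding \<Phi>_def using ia by auto
  have pb: "\<Phi> y \<ge> - c*V/2 - (y - \<mu>)^2/(2*c)" for y
    unfolding \<Phi>_def D1_def D2_def using phi_bound[OF s m c0] by blast
  have iq: "integrable M (\<lambda>\<omega>. - c*V/2 - (X \<omega> - \<mu>)^2/(2*c))" using XF(3) by auto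
  have "(\<integral>\<omega>. - c*V/2 - (X \<omega> - \<mu>)^2/(2*c) \<partial>M) \<le> (\<integral>\<omega>. \<Phi> (X \<omega>) \<partial>M)"
    using iq iPhi pb by (intro integral_mono) auto
  moreover have "(\<integral>\<omega>. - c*V/2 - (X \<omega> - \<mu>)^2/(2*c) \<partial>M) = - c*V/2 - \<sigma>^2/(2*c)"
    using XF(3,5) by (simp add: prob_space)
  moreover have "- c*V/2 - \<sigma>^2/(2*c) = - \<sigma> * r"
    unfolding c_def rV[symmetric] using r0 sg by (simp add: field_simps power2_eq_square)
  ultimately show ?thesis using low XF(4) unfolding r_def by simp
qed


lemma three_point:
  assumes P: "prob_space M" and AL: "atomless M"
    and G: "\<forall>p\<in>{0..1}. 0 \<le> g p \<and> g p \<le> 1 \<and> g p \<le> K * p \<and> 1 - g p \<le> K * (1 - p)"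
    and mono: "mono_on {0..1} g" and g0: "g 0 = 0" and g1: "g 1 = 1"
    and p: "0 \<le> p1" "0 \<le> p2" "0 \<le> p3" "p1 + p2 + p3 = 1"
    and z: "z3 \<le> z2" "z2 \<le> z1"
    and mean: "p1*z1 + p2*z2 + p3*z3 = \<mu>"
    and var: "p1*(z1-\<mu>)^2 + p2*(z2-\<mu>)^2 + p3*(z3-\<mu>)^2 = \<sigma>^2"
  shows "\<exists>X\<in>Vset M \<mu> \<sigma>. distortion_rm M g X = \<mu> + (g (p1+p2) - (p1+p2))*(z2 - z3) + (g p1 - p1)*(z1 - z2)"
proof -
  interpret prob_space M by fact
  obtain B1 where B1: "B1 \<in> sets M" "B1 \<subseteq> space M" "measure M B1 = p1"
    using atomless_exact[OF P AL sets.top, of p1] p by (auto simp: prob_space)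
  have "measure M (space M - B1) = 1 - p1" using B1 by (simp add: prob_compl)
  then obtain B2 where B2: "B2 \<in> sets M" "B2 \<subseteq> space M - B1" "measure M B2 = p2"
    using atomless_exact[OF P AL _ , of "space M - B1" p2] p B1 by auto
  note [measurable] = B1(1) B2(1)
  define X where "X \<omega> = (if \<omega> \<in> B1 then z1 else if \<omega> \<in> B2 then z2 else z3)" for \<omega>
  have Xm[measurable]: "X \<in> borel_measurable M" unfolding X_def by measurable
  have Xi: "X \<omega> = z3 + (z1 - z3) * indicator B1 \<omega> + (z2 - z3) * indicator B2 \<omega>" for \<omega>
    using B2 unfolding X_def by (auto simp: indicator_def)
  have fi: "(\<lambda>\<omega>. f (X \<omega>)) = (\<lambda>\<omega>. f z3 + (f z1 - f z3) * indicator B1 \<omega> + (f z2 - f z3) * indicator B2 \<omega>)" for f :: "real \<Rightarrow> real"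
    using B2 unfolding X_def by (auto simp: indicator_def fun_eq_iff)
  have ifi: "integrable M (\<lambda>\<omega>. f (X \<omega>))" for f :: "real \<Rightarrow> real"
    by (subst fi) (intro Bochner_Integration.integrable_add integrable_mult_right integrable_mult_left integrable_const integrable_real_indicator; simp add: less_top[symmetric])
  have efi: "(\<integral>\<omega>. f (X \<omega>) \<partial>M) = f z3 + (f z1 - f z3) * p1 + (f z2 - f z3) * p2" for f :: "real \<Rightarrow> real"
  proof -
    have "(\<integral>\<omega>. f (X \<omega>) \<partial>M) = (\<integral>\<omega>. f z3 + (f z1 - f z3) * indicator B1 \<omega> + (f z2 - f z3) * indicator B2 \<omega> \<partial>M)"
      by (subst fi) simp
    also have "\<dots> = f z3 + (f z1 - f z3) * p1 + (f z2 - f z3) * p2"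
    proof -
      have i1: "integrable M (\<lambda>\<omega>. (f z1 - f z3) * indicator B1 \<omega>)" "integrable M (\<lambda>\<omega>. (f z2 - f z3) * indicator B2 \<omega>)"
        by (intro integrable_mult_right integrable_real_indicator; simp add: less_top[symmetric])+
      have e1: "(\<integral>\<omega>. (f z1 - f z3) * indicator B1 \<omega> \<partial>M) = (f z1 - f z3) * p1"
        using B1 by (simp add: Int_absorb2)
      have e2: "(\<integral>\<omega>. (f z2 - f z3) * indicator B2 \<omega> \<partial>M) = (f z2 - f z3) * p2"
        using B2 by (simp add: Int_absorb2)
      show ?thesis
        using i1 e1 e2 B1(3) B2(3) by (simp add: prob_space)
    qed
    finally show ?thesis .
  qed
  have p3': "p3 = 1 - p1 - p2" using p by simp
  have XV: "X \<in> Vset M \<mu> \<sigma>"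
  proof -
    have "(\<integral>\<omega>. X \<omega> \<partial>M) = \<mu>" using efi[of "\<lambda>x. x"] mean by (simp add: p3' algebra_simps)
    moreover have "(\<integral>\<omega>. (X \<omega> - \<mu>)^2 \<partial>M) = \<sigma>^2" using efi[of "\<lambda>x. (x - \<mu>)^2"] var
      by (simp add: p3' algebra_simps)
    moreover have "integrable M (\<lambda>\<omega>. (X \<omega>)^2)" using ifi[of "\<lambda>x. x^2"] by simp
    ultimately show ?thesis unfolding Vset_def using Xm by auto
  qed
  have iX: "integrable M X" using ifi[of "\<lambda>x. x"] by simp
  have S: "surv M X x = (if z1 \<le> x then 0 else if z2 \<le> x then p1 else if z3 \<le> x then p1 + p2 else 1)" for x
  proof -
    have B12: "B1 \<inter> B2 = {}" using B2 by auto
    consider "z1 \<le> x" | "z2 \<le> x" "x < z1" | "z3 \<le> x" "x < z2" | "x < z3" by linarith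
    then show ?thesis
    proof cases
      case 1
      then have e: "{\<omega> \<in> space M. X \<omega> > x} = {}" using z unfolding X_def by auto
      show ?thesis using 1 unfolding surv_def e by simp
    next
      case 2
      then have e: "{\<omega> \<in> space M. X \<omega> > x} = B1" using z B1 unfolding X_def by auto
      show ?thesis using 2 z B1 unfolding surv_def e by simp
    next
      case 3
      then have e: "{\<omega> \<in> space M. X \<omega> > x} = B1 \<union> B2" using z B1 B2 unfolding X_def by auto
      have "measure M (B1 \<union> B2) = p1 + p2" using B1 B2 B12 by (simp add: finite_measure_Union)
      then show ?thesis using 3 z unfolding surv_def e by simp
    next
      case 4
      then have e: "{\<omega> \<in> space M. X \<omega> > x} = space M" using z unfolding X_def by auto
      show ?thesis using 4 z unfolding surv_def e by (simp add: prob_space)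
    qed
  qed
  have D: "g (surv M X x) - surv M X x = (g p1 - p1) * indicator {z2..<z1} x + (g (p1+p2) - (p1+p2)) * indicator {z3..<z2} x" for x
    unfolding S using z g0 g1 by (auto simp: indicator_def)
  have "distortion_rm M g X = (\<integral>\<omega>. X \<omega> \<partial>M) + (\<integral>x. g (surv M X x) - surv M X x \<partial>lborel)"
    using rho_decomp(2)[OF P Xm iX G mono] .
  also have "(\<integral>x. g (surv M X x) - surv M X x \<partial>lborel)
      = (\<integral>x. (g p1 - p1) * indicator {z2..<z1} x + (g (p1+p2) - (p1+p2)) * indicator {z3..<z2} x \<partial>lborel)"
    unfolding D ..
  also have "\<dots> = (g p1 - p1) * (z1 - z2) + (g (p1+p2) - (p1+p2)) * (z2 - z3)"
    using z by (simp add: integrable_real_mult_indicator mult.commute[of _ "indicator _ _"])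
  finally have "distortion_rm M g X = \<mu> + (g (p1+p2) - (p1+p2))*(z2 - z3) + (g p1 - p1)*(z1 - z2)"
    using Vset_facts(4)[OF P XV] by simp
  then show ?thesis using XV by blast
qed


lemma three_point_norm:
  assumes P: "prob_space M" and AL: "atomless M"
    and G: "\<forall>p\<in>{0..1}. 0 \<le> g p \<and> g p \<le> 1 \<and> g p \<le> K * p \<and> 1 - g p \<le> K * (1 - p)"
    and mono: "mono_on {0..1} g" and g0: "g 0 = 0" and g1: "g 1 = 1"
    and p: "0 \<le> p1" "0 \<le> p2" "0 \<le> p3" "p1 + p2 + p3 = 1"
    and w: "w3 \<le> w2" "w2 \<le> w1" and sg: "\<sigma> > 0"
    and W: "W = p1*(w1 - (p1*w1+p2*w2+p3*w3))^2 + p2*(w2 - (p1*w1+p2*w2+p3*w3))^2 + p3*(w3 - (p1*w1+p2*w2+p3*w3))^2"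
    and W0: "W > 0"
  shows "\<exists>X\<in>Vset M \<mu> \<sigma>. distortion_rm M g X = \<mu> + \<sigma> * ((g (p1+p2) - (p1+p2))*(w2 - w3) + (g p1 - p1)*(w1 - w2)) / sqrt W"
proof -
  define wb where "wb = p1*w1+p2*w2+p3*w3"
  define r where "r = sqrt W"
  have r0: "r > 0" and rW: "r^2 = W" unfolding r_def using W0 by auto
  define z where "z w = \<mu> + \<sigma> * (w - wb) / r" for w
  have zm: "z a \<le> z b" if "a \<le> b" for a b
    unfolding z_def using that sg r0 by (simp add: divide_right_mono mult_left_mono)
  have mean: "p1 * z w1 + p2 * z w2 + p3 * z w3 = \<mu>"
  proof -
    have "p1 * z w1 + p2 * z w2 + p3 * z w3 = (p1+p2+p3)*\<mu> + \<sigma> * (p1*w1+p2*w2+p3*w3 - (p1+p2+p3)*wb) / r"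
      unfolding z_def using r0 by (simp add: field_simps)
    then show ?thesis using p(4) unfolding wb_def by simp
  qed
  have var: "p1*(z w1-\<mu>)^2 + p2*(z w2-\<mu>)^2 + p3*(z w3-\<mu>)^2 = \<sigma>^2"
  proof -
    have "p1*(z w1-\<mu>)^2 + p2*(z w2-\<mu>)^2 + p3*(z w3-\<mu>)^2 = \<sigma>^2 * W / r^2"
      unfolding z_def W wb_def using r0 by (simp add: field_simps power2_eq_square)
    then show ?thesis using rW r0 W0 by simp
  qed
  obtain X where X: "X \<in> Vset M \<mu> \<sigma>" "distortion_rm M g X = \<mu> + (g (p1+p2) - (p1+p2))*(z w2 - z w3) + (g p1 - p1)*(z w1 - z w2)"
    using three_point[OF P AL G mono g0 g1 p zm[OF w(1)] zm[OF w(2)] mean var] by blast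
  have "\<mu> + (g (p1+p2) - (p1+p2))*(z w2 - z w3) + (g p1 - p1)*(z w1 - z w2)
      = \<mu> + \<sigma> * ((g (p1+p2) - (p1+p2))*(w2 - w3) + (g p1 - p1)*(w1 - w2)) / r"
    unfolding z_def using r0 by (simp add: field_simps)
  then have "distortion_rm M g X = \<mu> + \<sigma> * ((g (p1+p2) - (p1+p2))*(w2 - w3) + (g p1 - p1)*(w1 - w2)) / sqrt W"
    using X(2) unfolding r_def by (simp add: add.assoc)
  then show ?thesis using X(1) by blast
qed

lemma two_point:
  assumes P: "prob_space M" and AL: "atomless M"
    and G: "\<forall>p\<in>{0..1}. 0 \<le> g p \<and> g p \<le> 1 \<and> g p \<le> K * p \<and> 1 - g p \<le> K * (1 - p)"
    and mono: "mono_on {0..1} g" and g0: "g 0 = 0" and g1: "g 1 = 1"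
    and q: "0 < q" "q < 1" and sg: "\<sigma> > 0"
  shows "\<exists>X\<in>Vset M \<mu> \<sigma>. distortion_rm M g X = \<mu> + \<sigma> * (g q - q) / sqrt (q * (1 - q))"
proof -
  have W: "q * (1 - q) = q*(1 - (q*1+0*0+(1-q)*0))^2 + 0*(0 - (q*1+0*0+(1-q)*0))^2 + (1-q)*(0 - (q*1+0*0+(1-q)*0))^2"
    by (simp add: power2_eq_square algebra_simps)
  have W0: "q * (1 - q) > 0" using q by simp
  from three_point_norm[OF P AL G mono g0 g1, of q 0 "1-q" 0 0 1 \<sigma> "q*(1-q)" \<mu>] q sg W W0
  show ?thesis by simp
qed

lemma inf_eq:
  fixes f :: "'b \<Rightarrow> real"
  assumes lb: "\<forall>X\<in>V. T \<le> f X" and seq: "\<forall>n. Y n \<in> V" "(\<lambda>n. f (Y n)) \<longlonglongrightarrow> T"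
  shows "(INF X\<in>V. ereal (f X)) = ereal T"
proof (rule antisym)
  show "ereal T \<le> (INF X\<in>V. ereal (f X))" using lb by (auto intro!: INF_greatest)
  have "\<forall>n. (INF X\<in>V. ereal (f X)) \<le> ereal (f (Y n))" using seq(1) by (auto intro!: INF_lower)
  moreover have "(\<lambda>n. ereal (f (Y n))) \<longlonglongrightarrow> ereal T" using seq(2) by simp
  ultimately show "(INF X\<in>V. ereal (f X)) \<le> ereal T"
    by (intro LIMSEQ_le_const[where X="\<lambda>n. ereal (f (Y n))"]) auto
qed

lemma inf_eq_exact:
  fixes f :: "'b \<Rightarrow> real"
  assumes lb: "\<forall>X\<in>V. T \<le> f X" and ex: "\<exists>Y\<in>V. f Y = T"
  shows "(INF X\<in>V. ereal (f X)) = ereal T"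
proof -
  from ex obtain Y where "Y \<in> V" "f Y = T" by blast
  then show ?thesis using inf_eq[OF lb, of "\<lambda>n. Y"] by simp
qed

lemma seq0:
  fixes c :: real
  shows "(\<lambda>n. c / real (Suc (Suc n))) \<longlonglongrightarrow> 0"
  using LIMSEQ_Suc[OF LIMSEQ_Suc[OF lim_const_over_n[of c]]] by simp


context
  fixes \<alpha> \<beta> h1 h2 :: real
  assumes ab: "0 < \<alpha>" "\<alpha> < \<beta>" "\<beta> < 1" and hh: "0 \<le> h1" "h1 \<le> h2" "h2 < 1"
begin

lemma gv0: "gluevar h1 h2 \<beta> \<alpha> 0 = 0"
  using ab unfolding gluevar_def by simp

lemma gv1: "gluevar h1 h2 \<beta> \<alpha> 1 = 1"
  using ab unfolding gluevar_def by simp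

lemma gv_b1: "p < 1 - \<beta> \<Longrightarrow> gluevar h1 h2 \<beta> \<alpha> p = h1 * p / (1 - \<beta>)"
  unfolding gluevar_def by simp

lemma gv_mid: "1 - \<beta> \<le> p \<Longrightarrow> p < 1 - \<alpha> \<Longrightarrow> gluevar h1 h2 \<beta> \<alpha> p = h1 + (h2 - h1) * (p - (1 - \<beta>)) / (\<beta> - \<alpha>)"
  unfolding gluevar_def by simp

lemma gv_b3: "1 - \<alpha> \<le> p \<Longrightarrow> gluevar h1 h2 \<beta> \<alpha> p = 1"
  using ab unfolding gluevar_def by simp

lemma gv_b1_range: "0 \<le> p \<Longrightarrow> p < 1 - \<beta> \<Longrightarrow> 0 \<le> gluevar h1 h2 \<beta> \<alpha> p \<and> gluevar h1 h2 \<beta> \<alpha> p \<le> h1"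
proof -
  assume p: "0 \<le> p" "p < 1 - \<beta>"
  have "h1 * p \<le> h1 * (1 - \<beta>)" using p hh by (intro mult_left_mono) auto
  moreover have d: "1 - \<beta> > 0" using ab by simp
  ultimately show ?thesis using p hh gv_b1[OF p(2)] by (simp add: pos_divide_le_eq[OF d])
qed

lemma gv_mid_range: "1 - \<beta> \<le> p \<Longrightarrow> p < 1 - \<alpha> \<Longrightarrow> h1 \<le> gluevar h1 h2 \<beta> \<alpha> p \<and> gluevar h1 h2 \<beta> \<alpha> p \<le> h2"
proof -
  assume p: "1 - \<beta> \<le> p" "p < 1 - \<alpha>"
  define t where "t = (p - (1 - \<beta>)) / (\<beta> - \<alpha>)"
  have t: "0 \<le> t" "t \<le> 1" unfolding t_def using p ab by (auto simp: divide_simps)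
  have g: "gluevar h1 h2 \<beta> \<alpha> p = h1 + (h2 - h1) * t" unfolding gv_mid[OF p] t_def by simp
  have "(h2 - h1) * t \<le> (h2 - h1) * 1" "0 \<le> (h2 - h1) * t" using t hh by (intro mult_left_mono mult_nonneg_nonneg; simp)+
  then show ?thesis using g by simp
qed

lemma gv_range: "0 \<le> p \<Longrightarrow> 0 \<le> gluevar h1 h2 \<beta> \<alpha> p \<and> gluevar h1 h2 \<beta> \<alpha> p \<le> 1"
proof -
  assume p: "0 \<le> p"
  consider "p < 1 - \<beta>" | "1 - \<beta> \<le> p" "p < 1 - \<alpha>" | "1 - \<alpha> \<le> p" by linarith
  then show ?thesis
  proof cases
    case 1 then show ?thesis using gv_b1_range[OF p] hh by auto
  next
    case 2 then show ?thesis using gv_mid_range hh by fastforce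
  next
    case 3 then show ?thesis using gv_b3 by simp
  qed
qed

definition "KK = h1 / (1 - \<beta>) + 1 / (1 - \<beta>) + 1 / \<alpha>"

lemma gv_G: "\<forall>p\<in>{0..1}. 0 \<le> gluevar h1 h2 \<beta> \<alpha> p \<and> gluevar h1 h2 \<beta> \<alpha> p \<le> 1
   \<and> gluevar h1 h2 \<beta> \<alpha> p \<le> KK * p \<and> 1 - gluevar h1 h2 \<beta> \<alpha> p \<le> KK * (1 - p)"
proof
  fix p :: real assume p: "p \<in> {0..1}"
  let ?g = "gluevar h1 h2 \<beta> \<alpha> p"
  have r: "0 \<le> ?g" "?g \<le> 1" using gv_range p by auto
  have k1: "0 \<le> h1 / (1 - \<beta>)" "0 \<le> 1 / (1 - \<beta>)" "0 \<le> 1 / \<alpha>" using ab hh by auto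
  have Kp: "h1 / (1 - \<beta>) * p \<le> KK * p" "1 / (1 - \<beta>) * p \<le> KK * p" "1 / \<alpha> * (1 - p) \<le> KK * (1 - p)"
    unfolding KK_def using p k1 by (intro mult_right_mono; simp)+
  have A: "?g \<le> KK * p"
  proof (cases "p < 1 - \<beta>")
    case True then have "?g = h1 / (1 - \<beta>) * p" using gv_b1 by simp
    then show ?thesis using Kp by simp
  next
    case False then have "1 \<le> 1 / (1 - \<beta>) * p" using ab by (simp add: divide_simps)
    then show ?thesis using Kp r by linarith
  qed
  have B: "1 - ?g \<le> KK * (1 - p)"
  proof (cases "p < 1 - \<alpha>")
    case True then have "1 \<le> 1 / \<alpha> * (1 - p)" using ab by (simp add: divide_simps)
    then show ?thesis using Kp r by linarith
  next
    case False then have "?g = 1" using gv_b3 by simp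
    moreover have "0 \<le> KK * (1 - p)" unfolding KK_def using k1 p by (intro mult_nonneg_nonneg) auto
    ultimately show ?thesis by simp
  qed
  show "0 \<le> ?g \<and> ?g \<le> 1 \<and> ?g \<le> KK * p \<and> 1 - ?g \<le> KK * (1 - p)" using r A B by simp
qed

lemma gv_mono: "mono_on {0..1} (gluevar h1 h2 \<beta> \<alpha>)"
proof (rule mono_onI)
  fix x y :: real assume x: "x \<in> {0..1}" and y: "y \<in> {0..1}" and xy: "x \<le> y"
  let ?g = "gluevar h1 h2 \<beta> \<alpha>"
  consider "y < 1 - \<beta>" | "1 - \<beta> \<le> y" "y < 1 - \<alpha>" | "1 - \<alpha> \<le> y" by linarith
  then show "?g x \<le> ?g y"
  proof cases
    case 1
    then have "x < 1 - \<beta>" using xy by simp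
    then have "?g x = h1 * x / (1 - \<beta>)" "?g y = h1 * y / (1 - \<beta>)" using gv_b1 1 by auto
    moreover have "h1 * x \<le> h1 * y" using xy hh by (intro mult_left_mono) auto
    ultimately show ?thesis using ab by (simp add: divide_right_mono)
  next
    case 2
    show ?thesis
    proof (cases "x < 1 - \<beta>")
      case True then show ?thesis using gv_b1_range[of x] gv_mid_range[OF 2] x by auto
    next
      case False
      then have "?g x = h1 + (h2 - h1) * (x - (1 - \<beta>)) / (\<beta> - \<alpha>)" using gv_mid 2 xy by auto
      moreover have "?g y = h1 + (h2 - h1) * (y - (1 - \<beta>)) / (\<beta> - \<alpha>)" using gv_mid 2 by auto
      moreover have "(h2 - h1) * (x - (1 - \<beta>)) \<le> (h2 - h1) * (y - (1 - \<beta>))" using xy hh by (intro mult_left_mono) auto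
      ultimately show ?thesis using ab by (simp add: divide_right_mono)
    qed
  next
    case 3 then show ?thesis using gv_b3 gv_range[of x] x by auto
  qed
qed

lemma gv_line:
  assumes l0: "a \<le> 0" and l1: "a + b * (1 - \<beta>) \<le> h1" and l2: "a + b * (1 - \<alpha>) \<le> h2" and l3: "a + b \<le> 1"
  shows "\<forall>p\<in>{0..1}. a + b * p \<le> gluevar h1 h2 \<beta> \<alpha> p"
proof
  fix p :: real assume p: "p \<in> {0..1}"
  let ?g = "gluevar h1 h2 \<beta> \<alpha> p"
  consider "p < 1 - \<beta>" | "1 - \<beta> \<le> p" "p < 1 - \<alpha>" | "1 - \<alpha> \<le> p" by linarith
  then show "a + b * p \<le> ?g"
  proof cases
    case 1
    define t where "t = p / (1 - \<beta>)"
    have t: "0 \<le> t" "t \<le> 1" unfolding t_def using p 1 ab by (auto simp: divide_simps)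
    have tp: "t * (1 - \<beta>) = p" unfolding t_def using ab by simp
    have "(1 - t) * a + t * (a + b * (1 - \<beta>)) = a + b * (t * (1 - \<beta>))" by (simp add: algebra_simps)
    then have e: "a + b * p = (1 - t) * a + t * (a + b * (1 - \<beta>))" using tp by simp
    have g: "?g = t * h1" unfolding t_def gv_b1[OF 1] by simp
    have "(1 - t) * a \<le> 0" using t l0 by (simp add: mult_nonneg_nonpos)
    moreover have "t * (a + b * (1 - \<beta>)) \<le> t * h1" using t l1 by (intro mult_left_mono) auto
    ultimately show ?thesis using e g by linarith
  next
    case 2
    define t where "t = (p - (1 - \<beta>)) / (\<beta> - \<alpha>)"
    have t: "0 \<le> t" "t \<le> 1" unfolding t_def using 2 ab by (auto simp: divide_simps)
    have tp: "t * (\<beta> - \<alpha>) = p - (1 - \<beta>)" unfolding t_def using ab by simp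
    have "(1 - t) * (a + b * (1 - \<beta>)) + t * (a + b * (1 - \<alpha>)) = a + b * (1 - \<beta>) + b * (t * (\<beta> - \<alpha>))"
      by (simp add: algebra_simps)
    moreover have pe: "p = (1 - \<beta>) + t * (\<beta> - \<alpha>)" using tp by simp
    have e: "a + b * p = (1 - t) * (a + b * (1 - \<beta>)) + t * (a + b * (1 - \<alpha>))"
      by (subst pe) (simp add: algebra_simps)
    have "?g = h1 + (h2 - h1) * t" unfolding gv_mid[OF 2] t_def by simp
    then have g: "?g = (1 - t) * h1 + t * h2" by (simp add: algebra_simps)
    have "(1 - t) * (a + b * (1 - \<beta>)) \<le> (1 - t) * h1" using t l1 by (intro mult_left_mono) auto
    moreover have "t * (a + b * (1 - \<alpha>)) \<le> t * h2" using t l2 by (intro mult_left_mono) auto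
    ultimately show ?thesis using e g by linarith
  next
    case 3
    have g: "?g = 1" using gv_b3[OF 3] .
    show ?thesis
    proof (cases "b \<ge> 0")
      case True then have "b * p \<le> b * 1" using p by (intro mult_left_mono) auto
      then show ?thesis using g l3 by simp
    next
      case False then have "b * p \<le> b * (1 - \<alpha>)" using 3 by (intro mult_left_mono_neg) auto
      then show ?thesis using g l2 hh by simp
    qed
  qed
qed

end


lemma gv_basic:
  assumes ab: "0 < \<alpha>" "\<alpha> < \<beta>" "\<beta> < 1" and hh: "0 \<le> h1" "h1 \<le> h2" "h2 < 1"
  shows "\<exists>K. \<forall>p\<in>{0..1}. 0 \<le> gluevar h1 h2 \<beta> \<alpha> p \<and> gluevar h1 h2 \<beta> \<alpha> p \<le> 1
     \<and> gluevar h1 h2 \<beta> \<alpha> p \<le> K * p \<and> 1 - gluevar h1 h2 \<beta> \<alpha> p \<le> K * (1 - p)"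
    "mono_on {0..1} (gluevar h1 h2 \<beta> \<alpha>)" "gluevar h1 h2 \<beta> \<alpha> 0 = 0" "gluevar h1 h2 \<beta> \<alpha> 1 = 1"
  using gv_G[OF ab hh] gv_mono[OF ab hh] gv0[OF ab hh] gv1[OF ab hh] by blast+

lemma seq_choice:
  assumes "\<forall>n. \<exists>X\<in>V. f X = F n"
  obtains Y where "\<forall>n. Y n \<in> V" "\<forall>n. f (Y n) = F n"
proof -
  from assms have "\<forall>n. \<exists>X. X \<in> V \<and> f X = F n" by blast
  then obtain Y where "\<forall>n. Y n \<in> V \<and> f (Y n) = F n" by metis
  then show ?thesis using that by blast
qed

lemma case_i:
  assumes P: "prob_space M" and AL: "atomless M" and sg: "\<sigma> > 0"
    and ab: "0 < \<alpha>" "\<alpha> < \<beta>" "\<beta> < 1" and hh: "0 \<le> h1" "h1 \<le> h2" "h2 < 1"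
    and c: "1 - \<beta> \<le> h1" "1 - \<alpha> \<le> h2"
  shows "(INF X\<in>Vset M \<mu> \<sigma>. ereal (distortion_rm M (gluevar h1 h2 \<beta> \<alpha>) X)) = ereal \<mu>"
proof -
  let ?g = "gluevar h1 h2 \<beta> \<alpha>"
  obtain K where G: "\<forall>p\<in>{0..1}. 0 \<le> ?g p \<and> ?g p \<le> 1 \<and> ?g p \<le> K * p \<and> 1 - ?g p \<le> K * (1 - p)"
    using gv_basic[OF ab hh] by blast
  note B = gv_basic(2-4)[OF ab hh]
  have line: "\<forall>p\<in>{0..1}. 0 + 1 * p \<le> ?g p" using gv_line[OF ab hh, of 0 1] c by simp
  have low: "\<mu> \<le> distortion_rm M ?g X" if X: "X \<in> Vset M \<mu> \<sigma>" for X
  proof -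
    note XF = Vset_facts[OF P X]
    have H: "\<forall>p\<in>{0..1}. ?g p - p \<ge> 0 * p" "\<forall>p\<in>{0..1}. ?g p - p \<ge> 0 * (1 - p) + 0 * p"
      "\<forall>p\<in>{0..1}. ?g p - p \<ge> - 0 * (1 - p)" using line by auto
    from rho_lower[OF P XF(1) XF(2) G B(1) H(1) H(2) H(3), of 0 0] XF(4) show ?thesis by simp
  qed
  define e where "e n = \<alpha> / real (Suc (Suc n))" for n
  have e: "0 < e n" "e n < 1" "e n \<le> \<alpha>" for n
    unfolding e_def using ab by (auto simp: divide_simps)
  have "\<forall>n. \<exists>X\<in>Vset M \<mu> \<sigma>. distortion_rm M ?g X = \<mu> + \<sigma> * (sqrt (e n) / sqrt (1 - e n))"
  proof
    fix n
    have q: "0 < 1 - e n" "1 - e n < 1" using e[of n] by auto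
    obtain X where X: "X \<in> Vset M \<mu> \<sigma>" "distortion_rm M ?g X = \<mu> + \<sigma> * (?g (1 - e n) - (1 - e n)) / sqrt ((1 - e n) * (1 - (1 - e n)))"
      using two_point[OF P AL G B q sg] by blast
    have g1: "?g (1 - e n) = 1" using gv_b3[OF ab hh] e[of n] by simp
    have "(1 - (1 - e n)) / sqrt ((1 - e n) * (1 - (1 - e n))) = sqrt (e n) / sqrt (1 - e n)"
      using e[of n] by (smt (verit, ccfv_SIG) divide_divide_eq_left' real_div_sqrt real_sqrt_mult)
    moreover have "distortion_rm M ?g X = \<mu> + \<sigma> * ((1 - (1 - e n)) / sqrt ((1 - e n) * (1 - (1 - e n))))"
      using X(2) unfolding g1 by simp
    ultimately show "\<exists>X\<in>Vset M \<mu> \<sigma>. distortion_rm M ?g X = \<mu> + \<sigma> * (sqrt (e n) / sqrt (1 - e n))"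
      using X(1) by metis
  qed
  then obtain Y where Y: "\<forall>n. Y n \<in> Vset M \<mu> \<sigma>" "\<forall>n. distortion_rm M ?g (Y n) = \<mu> + \<sigma> * (sqrt (e n) / sqrt (1 - e n))"
    by (rule seq_choice)
  have e0: "e \<longlonglongrightarrow> 0" unfolding e_def by (rule seq0)
  have "(\<lambda>n. \<mu> + \<sigma> * (sqrt (e n) / sqrt (1 - e n))) \<longlonglongrightarrow> \<mu> + \<sigma> * (sqrt 0 / sqrt (1 - 0))"
    by (intro tendsto_intros e0) auto
  then have "(\<lambda>n. distortion_rm M ?g (Y n)) \<longlonglongrightarrow> \<mu>" using Y(2) by simp
  then show ?thesis using inf_eq[of "Vset M \<mu> \<sigma>" \<mu> "distortion_rm M ?g" Y] low Y(1) by auto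
qed


lemma sqrt_two_piece:
  fixes q u :: real
  assumes q: "0 < q" "q < 1" and u: "u \<le> 0"
  shows "sqrt (q * (u / q)^2 + (1 - q) * (- u / (1 - q))^2) = - u / sqrt (q * (1 - q))"
proof -
  have "q * (u / q)^2 + (1 - q) * (- u / (1 - q))^2 = u^2 / (q * (1 - q))"
  proof -
    have n: "1 - q \<noteq> 0" "q \<noteq> 0" using q by auto
    have a: "q * (u / q)^2 = u^2 / q" using n by (simp add: power2_eq_square)
    have b: "(1 - q) * (- u / (1 - q))^2 = u^2 / (1 - q)" using n by (simp add: power2_eq_square)
    have "u^2 / q + u^2 / (1 - q) = u^2 / (q * (1 - q))" using n by (simp add: field_simps)
    then show ?thesis using a b by simp
  qed
  then have "sqrt (q * (u / q)^2 + (1 - q) * (- u / (1 - q))^2) = sqrt (u^2) / sqrt (q * (1 - q))"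
    by (simp add: real_sqrt_divide)
  then show ?thesis using u by simp
qed

lemma case_ii:
  assumes P: "prob_space M" and AL: "atomless M" and sg: "\<sigma> > 0"
    and ab: "0 < \<alpha>" "\<alpha> < \<beta>" "\<beta> < 1" and hh: "0 \<le> h1" "h1 \<le> h2" "h2 < 1"
    and c: "(h2 - h1) / (\<beta> - \<alpha>) \<le> h1 / (1 - \<beta>)" "h2 < 1 - \<alpha>"
  shows "(INF X\<in>Vset M \<mu> \<sigma>. ereal (distortion_rm M (gluevar h1 h2 \<beta> \<alpha>) X))
     = ereal (\<mu> + \<sigma> * (h2 - 1 + \<alpha>) / sqrt (\<alpha> * (1 - \<alpha>)))"
proof -
  let ?g = "gluevar h1 h2 \<beta> \<alpha>"
  obtain K where G: "\<forall>p\<in>{0..1}. 0 \<le> ?g p \<and> ?g p \<le> 1 \<and> ?g p \<le> K * p \<and> 1 - ?g p \<le> K * (1 - p)"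
    using gv_basic[OF ab hh] by blast
  note B = gv_basic(2-4)[OF ab hh]
  have D: "(h2 - h1) * (1 - \<beta>) \<le> h1 * (\<beta> - \<alpha>)"
  proof -
    have "(h2 - h1) / (\<beta> - \<alpha>) * ((\<beta> - \<alpha>) * (1 - \<beta>)) \<le> h1 / (1 - \<beta>) * ((\<beta> - \<alpha>) * (1 - \<beta>))"
      using c(1) ab by (intro mult_right_mono) auto
    moreover have "(h2 - h1) / (\<beta> - \<alpha>) * ((\<beta> - \<alpha>) * (1 - \<beta>)) = (h2 - h1) * (1 - \<beta>)"
      "h1 / (1 - \<beta>) * ((\<beta> - \<alpha>) * (1 - \<beta>)) = h1 * (\<beta> - \<alpha>)" using ab by auto
    ultimately show ?thesis by simp
  qed
  define u where "u = h2 - 1 + \<alpha>"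
  have u0: "u < 0" unfolding u_def using c by simp
  define s1 where "s1 = h2 / (1 - \<alpha>)"
  define k3 where "k3 = (1 - h2) / \<alpha>"
  have s1a: "s1 * (1 - \<alpha>) = h2" unfolding s1_def using ab by simp
  have k3a: "k3 * \<alpha> = 1 - h2" unfolding k3_def using ab by simp
  have s1le: "s1 \<le> 1" unfolding s1_def using ab c by simp
  have k3ge: "1 \<le> k3" unfolding k3_def using ab c by (simp add: field_simps)
  have Dh: "h2 * (1 - \<beta>) \<le> h1 * (1 - \<alpha>)" using D by (simp add: algebra_simps)
  have s1b: "s1 * (1 - \<beta>) \<le> h1"
  proof -
    have "s1 * (1 - \<beta>) = h2 * (1 - \<beta>) / (1 - \<alpha>)" unfolding s1_def by simp
    also have "\<dots> \<le> h1" using Dh ab by (simp add: pos_divide_le_eq)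
    finally show ?thesis .
  qed
  have hd: "h2 - h1 \<le> \<beta> - \<alpha>"
  proof -
    have "(h2 - h1) * (1 - \<alpha>) \<le> h2 * (\<beta> - \<alpha>)" using Dh by (simp add: algebra_simps)
    also have "\<dots> \<le> (1 - \<alpha>) * (\<beta> - \<alpha>)" using c ab by (intro mult_right_mono) auto
    finally show ?thesis using ab by (simp add: mult.commute)
  qed
  have k3b: "1 - k3 * \<beta> \<le> h1"
  proof -
    have "(h2 - h1) * 1 \<le> (\<beta> - \<alpha>) * k3" using hd k3ge ab by (intro mult_mono) auto
    then show ?thesis using k3a by (simp add: algebra_simps)
  qed
  define m1 where "m1 = s1 - 1"
  define m3 where "m3 = k3 - 1"
  have L1: "\<forall>p\<in>{0..1}. ?g p - p \<ge> m1 * p"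
    using gv_line[OF ab hh, of 0 s1] s1b s1a s1le unfolding m1_def by (auto simp: algebra_simps)
  have L2: "\<forall>p\<in>{0..1}. ?g p - p \<ge> m1 * (1 - \<alpha>) + m1 * (p - (1 - \<alpha>))"
    using L1 by (simp add: algebra_simps)
  have L3: "\<forall>p\<in>{0..1}. ?g p - p \<ge> m3 * (p - 1)"
    using gv_line[OF ab hh, of "1 - k3" k3] k3ge k3b k3a unfolding m3_def by (auto simp: algebra_simps)
  have m1u: "m1 = u / (1 - \<alpha>)" unfolding m1_def s1_def u_def using ab by (simp add: field_simps)
  have m3u: "m3 = - u / \<alpha>" unfolding m3_def k3_def u_def using ab by (simp add: field_simps)
  define V where "V = (1 - \<alpha>) * m1^2 + 0 * m1^2 + \<alpha> * m3^2"
  have sum: "(1 - \<alpha>) * m1 + 0 * m1 + \<alpha> * m3 = 0" unfolding m1u m3u using ab by simp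
  have V0: "V > 0"
  proof -
    have "m3 \<noteq> 0" unfolding m3u using ab u0 by simp
    then have "\<alpha> * m3^2 > 0" using ab by simp
    moreover have "(1 - \<alpha>) * m1^2 \<ge> 0" using ab by simp
    ultimately show ?thesis unfolding V_def by simp
  qed
  have sV: "sqrt V = - u / sqrt (\<alpha> * (1 - \<alpha>))"
  proof -
    have eq: "V = \<alpha> * (u / \<alpha>)^2 + (1 - \<alpha>) * (- u / (1 - \<alpha>))^2" unfolding V_def m1u m3u
      by (simp add: power2_eq_square)
    show ?thesis unfolding eq by (rule sqrt_two_piece) (use ab u0 in auto)
  qed
  have mm: "m1 \<le> m1" "m1 \<le> m3" unfolding m1_def m3_def using s1le k3ge by auto
  have low: "\<mu> + \<sigma> * u / sqrt (\<alpha> * (1 - \<alpha>)) \<le> distortion_rm M ?g X" if X: "X \<in> Vset M \<mu> \<sigma>" for X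
  proof -
    have p: "(1 - \<alpha>) + 0 + \<alpha> = 1" by simp
    from core_lower[OF P X sg G B(1) p sum V_def mm V0 _ L2 L3] L1
    have "\<mu> - \<sigma> * sqrt V \<le> distortion_rm M ?g X" by simp
    then show ?thesis unfolding sV by simp
  qed
  define e where "e n = (\<beta> - \<alpha>) / real (Suc (Suc n))" for n
  have e: "0 < e n" "e n \<le> (\<beta> - \<alpha>) / 2" for n
  proof -
    show "0 < e n" unfolding e_def using ab by simp
    show "e n \<le> (\<beta> - \<alpha>) / 2" unfolding e_def using ab by (intro divide_left_mono) auto
  qed
  define F where "F x = \<mu> + \<sigma> * (h1 + (h2 - h1) * ((1 - \<alpha> - x) - (1 - \<beta>)) / (\<beta> - \<alpha>) - (1 - \<alpha> - x))
      / sqrt ((1 - \<alpha> - x) * (1 - (1 - \<alpha> - x)))" for x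
  have "\<forall>n. \<exists>X\<in>Vset M \<mu> \<sigma>. distortion_rm M ?g X = F (e n)"
  proof
    fix n
    have q: "0 < 1 - \<alpha> - e n" "1 - \<alpha> - e n < 1" using e[of n] ab by auto
    have gq: "?g (1 - \<alpha> - e n) = h1 + (h2 - h1) * ((1 - \<alpha> - e n) - (1 - \<beta>)) / (\<beta> - \<alpha>)"
      using gv_mid[OF ab hh] e[of n] ab by simp
    obtain X where X: "X \<in> Vset M \<mu> \<sigma>" "distortion_rm M ?g X = \<mu> + \<sigma> * (?g (1 - \<alpha> - e n) - (1 - \<alpha> - e n)) / sqrt ((1 - \<alpha> - e n) * (1 - (1 - \<alpha> - e n)))"
      using two_point[OF P AL G B q sg] by blast
    have "distortion_rm M ?g X = F (e n)" using X(2) unfolding F_def gq by simp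
    then show "\<exists>X\<in>Vset M \<mu> \<sigma>. distortion_rm M ?g X = F (e n)" using X(1) by blast
  qed
  then obtain Y where Y: "\<forall>n. Y n \<in> Vset M \<mu> \<sigma>" "\<forall>n. distortion_rm M ?g (Y n) = F (e n)"
    by (rule seq_choice)
  have e0: "e \<longlonglongrightarrow> 0" unfolding e_def by (rule seq0)
  have "(\<lambda>n. F (e n)) \<longlonglongrightarrow> F 0"
    unfolding F_def using ab by (intro tendsto_intros e0) auto
  moreover have "F 0 = \<mu> + \<sigma> * u / sqrt (\<alpha> * (1 - \<alpha>))"
    unfolding F_def u_def using ab by (simp add: mult.commute)
  ultimately have "(\<lambda>n. distortion_rm M ?g (Y n)) \<longlonglongrightarrow> \<mu> + \<sigma> * u / sqrt (\<alpha> * (1 - \<alpha>))" using Y(2) by simp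
  then show ?thesis using inf_eq[of "Vset M \<mu> \<sigma>" _ "distortion_rm M ?g" Y] low Y(1) unfolding u_def by auto
qed


lemma lower_iii:
  assumes P: "prob_space M" and sg: "\<sigma> > 0"
    and ab: "0 < \<alpha>" "\<alpha> < \<beta>" "\<beta> < 1" and hh: "0 \<le> h1" "h1 \<le> h2" "h2 < 1"
    and kd: "k1 = (h2 - h1) / (\<beta> - \<alpha>)" "k2 = h1 / (1 - \<beta>)" "k3 = (1 - h2) / \<alpha>"
    and c: "k2 < k1" "k1 \<le> k3"
    and X: "X \<in> Vset M \<mu> \<sigma>"
  shows "\<mu> - \<sigma> * sqrt ((1-\<beta>)*(k2-1)^2 + (\<beta>-\<alpha>)*(k1-1)^2 + \<alpha>*(k3-1)^2) \<le> distortion_rm M (gluevar h1 h2 \<beta> \<alpha>) X"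
proof -
  let ?g = "gluevar h1 h2 \<beta> \<alpha>"
  obtain K where G: "\<forall>p\<in>{0..1}. 0 \<le> ?g p \<and> ?g p \<le> 1 \<and> ?g p \<le> K * p \<and> 1 - ?g p \<le> K * (1 - p)"
    using gv_basic[OF ab hh] by blast
  note B = gv_basic(2-4)[OF ab hh]
  have E1: "h1 = k2 * (1 - \<beta>)" and E2: "h2 - h1 = k1 * (\<beta> - \<alpha>)" and E3: "1 - h2 = k3 * \<alpha>"
    unfolding kd using ab by auto
  have F1: "k2*(\<beta>-\<alpha>) \<le> k1*(\<beta>-\<alpha>)" "k1*\<alpha> \<le> k3*\<alpha>" "k1*(\<beta>-\<alpha>) \<le> k3*(\<beta>-\<alpha>)"
    "k2*(1-\<beta>) \<le> k1*(1-\<beta>)" "k2*\<alpha> \<le> k3*\<alpha>" "k2*(1-\<beta>) \<le> k3*(1-\<beta>)"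
    using c ab by (intro mult_right_mono; simp)+
  have S: "k2*(1-\<beta>) + k1*(\<beta>-\<alpha>) + k3*\<alpha> = 1" using E1 E2 E3 by simp
  have r2: "k2 = k2*(1-\<beta>) + k2*(\<beta>-\<alpha>) + k2*\<alpha>" "k3 = k3*(1-\<beta>) + k3*(\<beta>-\<alpha>) + k3*\<alpha>"
    by (simp_all add: algebra_simps)
  have k2le: "k2 \<le> 1" using S r2 F1 by linarith
  have k3ge: "1 \<le> k3" using S r2 F1 by linarith
  have L1': "\<forall>p\<in>{0..1}. 0 + k2 * p \<le> ?g p"
  proof (rule gv_line[OF ab hh])
    have "k2 * (1 - \<alpha>) = k2*(1-\<beta>) + k2*(\<beta>-\<alpha>)" by (simp add: algebra_simps)
    then show "0 + k2 * (1 - \<alpha>) \<le> h2" using E1 E2 F1 by linarith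
  qed (use E1 k2le in auto)
  have L1: "\<forall>p\<in>{0..1}. ?g p - p \<ge> (k2 - 1) * p" using L1' by (auto simp: algebra_simps)
  have L2': "\<forall>p\<in>{0..1}. (h1 - k1*(1-\<beta>)) + k1 * p \<le> ?g p"
  proof (rule gv_line[OF ab hh])
    show "h1 - k1 * (1 - \<beta>) \<le> 0" using E1 F1 by linarith
    show "h1 - k1 * (1 - \<beta>) + k1 * (1 - \<beta>) \<le> h1" by simp
    have "h1 - k1 * (1 - \<beta>) + k1 * (1 - \<alpha>) = h1 + k1 * (\<beta> - \<alpha>)" by (simp add: algebra_simps)
    then show "h1 - k1 * (1 - \<beta>) + k1 * (1 - \<alpha>) \<le> h2" using E2 by linarith
    have "h1 - k1 * (1 - \<beta>) + k1 = h1 + k1 * (\<beta> - \<alpha>) + k1 * \<alpha>" by (simp add: algebra_simps)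
    then show "h1 - k1 * (1 - \<beta>) + k1 \<le> 1" using E2 E3 F1 by linarith
  qed
  have L2: "\<forall>p\<in>{0..1}. ?g p - p \<ge> (k2 - 1) * (1 - \<beta>) + (k1 - 1) * (p - (1 - \<beta>))"
  proof
    fix p :: real assume p: "p \<in> {0..1}"
    have "(k2 - 1) * (1 - \<beta>) + (k1 - 1) * (p - (1 - \<beta>)) = (h1 - k1*(1-\<beta>)) + k1 * p - p"
      using E1 by (simp add: algebra_simps)
    moreover have "(h1 - k1*(1-\<beta>)) + k1 * p \<le> ?g p" using L2' p by blast
    ultimately show "?g p - p \<ge> (k2 - 1) * (1 - \<beta>) + (k1 - 1) * (p - (1 - \<beta>))" by linarith
  qed
  have L3': "\<forall>p\<in>{0..1}. (1 - k3) + k3 * p \<le> ?g p"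
  proof (rule gv_line[OF ab hh])
    show "1 - k3 \<le> 0" using k3ge by simp
    have "1 - k3 + k3 * (1 - \<beta>) = 1 - k3*(\<beta>-\<alpha>) - k3*\<alpha>" by (simp add: algebra_simps)
    then show "1 - k3 + k3 * (1 - \<beta>) \<le> h1" using E2 E3 F1 by linarith
    have "1 - k3 + k3 * (1 - \<alpha>) = 1 - k3 * \<alpha>" by (simp add: algebra_simps)
    then show "1 - k3 + k3 * (1 - \<alpha>) \<le> h2" using E3 by linarith
  qed simp
  have L3: "\<forall>p\<in>{0..1}. ?g p - p \<ge> (k3 - 1) * (p - 1)" using L3' by (auto simp: algebra_simps)
  define V where "V = (1-\<beta>)*(k2-1)^2 + (\<beta>-\<alpha>)*(k1-1)^2 + \<alpha>*(k3-1)^2"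
  have p: "(1-\<beta>) + (\<beta>-\<alpha>) + \<alpha> = 1" by simp
  have sum: "(1-\<beta>)*(k2-1) + (\<beta>-\<alpha>)*(k1-1) + \<alpha>*(k3-1) = 0" using S by (simp add: algebra_simps)
  have mm: "k2 - 1 \<le> k1 - 1" "k1 - 1 \<le> k3 - 1" using c by auto
  have V0: "V > 0"
  proof (rule ccontr)
    assume "\<not> V > 0"
    moreover have t: "(1-\<beta>)*(k2-1)^2 \<ge> 0" "(\<beta>-\<alpha>)*(k1-1)^2 \<ge> 0" "\<alpha>*(k3-1)^2 \<ge> 0" using ab by auto
    ultimately have z: "(1-\<beta>)*(k2-1)^2 = 0" "\<alpha>*(k3-1)^2 = 0" unfolding V_def by linarith+
    then have "k2 = 1" "k3 = 1" using ab by auto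
    then have "(\<beta>-\<alpha>)*(k1-1) = 0" using sum by simp
    then have "k1 = 1" using ab by simp
    then show False using c \<open>k2 = 1\<close> by simp
  qed
  have "(1 - \<beta>) * (k2 - 1) + (k1 - 1) * (p - (1 - \<beta>)) = (k2 - 1) * (1 - \<beta>) + (k1 - 1) * (p - (1 - \<beta>))" for p
    by simp
  from core_lower[OF P X sg G B(1) p sum V_def mm V0] L1 L2 L3
  show ?thesis unfolding V_def by (simp add: mult.commute)
qed

lemma upper_iv:
  assumes P: "prob_space M" and AL: "atomless M" and sg: "\<sigma> > 0"
    and ab: "0 < \<alpha>" "\<alpha> < \<beta>" "\<beta> < 1" and hh: "0 \<le> h1" "h1 \<le> h2" "h2 < 1"
  shows "\<exists>X\<in>Vset M \<mu> \<sigma>. distortion_rm M (gluevar h1 h2 \<beta> \<alpha>) X = \<mu> + \<sigma> * (h1 - 1 + \<beta>) / sqrt (\<beta> * (1 - \<beta>))"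
proof -
  let ?g = "gluevar h1 h2 \<beta> \<alpha>"
  obtain K where G: "\<forall>p\<in>{0..1}. 0 \<le> ?g p \<and> ?g p \<le> 1 \<and> ?g p \<le> K * p \<and> 1 - ?g p \<le> K * (1 - p)"
    using gv_basic[OF ab hh] by blast
  note B = gv_basic(2-4)[OF ab hh]
  have q: "0 < 1 - \<beta>" "1 - \<beta> < 1" using ab by auto
  have gq: "?g (1 - \<beta>) = h1" using gv_mid[OF ab hh, of "1 - \<beta>"] ab by simp
  obtain X where X: "X \<in> Vset M \<mu> \<sigma>" "distortion_rm M ?g X = \<mu> + \<sigma> * (?g (1 - \<beta>) - (1 - \<beta>)) / sqrt ((1 - \<beta>) * (1 - (1 - \<beta>)))"
    using two_point[OF P AL G B q sg] by blast
  have "distortion_rm M ?g X = \<mu> + \<sigma> * (h1 - 1 + \<beta>) / sqrt (\<beta> * (1 - \<beta>))"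
    using X(2) unfolding gq by (simp add: mult.commute)
  then show ?thesis using X(1) by blast
qed

lemma case_iv_a:
  assumes P: "prob_space M" and AL: "atomless M" and sg: "\<sigma> > 0"
    and ab: "0 < \<alpha>" "\<alpha> < \<beta>" "\<beta> < 1" and hh: "0 \<le> h1" "h1 \<le> h2" "h2 < 1"
    and kd: "k1 = (h2 - h1) / (\<beta> - \<alpha>)" "k2 = h1 / (1 - \<beta>)" "k3 = (1 - h2) / \<alpha>"
    and c: "k3 = k1" "k1 > k2"
  shows "(INF X\<in>Vset M \<mu> \<sigma>. ereal (distortion_rm M (gluevar h1 h2 \<beta> \<alpha>) X))
     = ereal (\<mu> + \<sigma> * (h1 - 1 + \<beta>) / sqrt (\<beta> * (1 - \<beta>)))"
proof (rule inf_eq_exact)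
  define u where "u = h1 - 1 + \<beta>"
  have E1: "h1 = k2 * (1 - \<beta>)" and E2: "h2 - h1 = k1 * (\<beta> - \<alpha>)" and E3: "1 - h2 = k3 * \<alpha>"
    unfolding kd using ab by auto
  have S: "k2*(1-\<beta>) + k1*\<beta> = 1" using E1 E2 E3 c(1) by (simp add: algebra_simps)
  have F: "k2*\<beta> < k1*\<beta>" using c ab by simp
  have r2: "k2 = k2*(1-\<beta>) + k2*\<beta>" by (simp add: algebra_simps)
  have k2l: "k2 < 1" using S F r2 by linarith
  have "u = (k2 - 1) * (1 - \<beta>)" unfolding u_def E1 by (simp add: algebra_simps)
  then have u0: "u \<le> 0" using k2l ab by (simp add: mult_nonpos_nonneg)
  show "\<forall>X\<in>Vset M \<mu> \<sigma>. \<mu> + \<sigma> * (h1 - 1 + \<beta>) / sqrt (\<beta> * (1 - \<beta>)) \<le> distortion_rm M (gluevar h1 h2 \<beta> \<alpha>) X"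
  proof
    fix X assume X: "X \<in> Vset M \<mu> \<sigma>"
    have l: "\<mu> - \<sigma> * sqrt ((1-\<beta>)*(k2-1)^2 + (\<beta>-\<alpha>)*(k1-1)^2 + \<alpha>*(k3-1)^2) \<le> distortion_rm M (gluevar h1 h2 \<beta> \<alpha>) X"
      using lower_iii[OF P sg ab hh kd _ _ X] c by simp
    have m2: "k2 - 1 = u / (1 - \<beta>)" unfolding u_def using E1 ab by (simp add: field_simps)
    have m1: "k1 - 1 = - u / (1 - (1 - \<beta>))" unfolding u_def using S E1 ab by (simp add: field_simps)
    have "(1-\<beta>)*(k2-1)^2 + (\<beta>-\<alpha>)*(k1-1)^2 + \<alpha>*(k3-1)^2 = (1-\<beta>)*(k2-1)^2 + (1 - (1 - \<beta>))*(k1-1)^2"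
      using c(1) by (simp add: algebra_simps)
    also have "\<dots> = (1-\<beta>)*(u / (1 - \<beta>))^2 + (1 - (1 - \<beta>))*(- u / (1 - (1 - \<beta>)))^2" unfolding m1 m2 ..
    finally have "sqrt ((1-\<beta>)*(k2-1)^2 + (\<beta>-\<alpha>)*(k1-1)^2 + \<alpha>*(k3-1)^2) = - u / sqrt ((1 - \<beta>) * (1 - (1 - \<beta>)))"
      using sqrt_two_piece[of "1 - \<beta>" u] ab u0 by simp
    then show "\<mu> + \<sigma> * (h1 - 1 + \<beta>) / sqrt (\<beta> * (1 - \<beta>)) \<le> distortion_rm M (gluevar h1 h2 \<beta> \<alpha>) X"
    proof -
      have z: "\<sigma> * (1 - h1 - \<beta>) / sqrt (\<beta> * (1 - \<beta>)) + \<sigma> * (h1 - 1 + \<beta>) / sqrt (\<beta> * (1 - \<beta>)) = 0"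
        by (simp add: add_divide_distrib[symmetric] algebra_simps)
      show ?thesis using l \<open>sqrt _ = _\<close> z unfolding u_def by (simp add: mult.commute)
    qed
  qed
  show "\<exists>Y\<in>Vset M \<mu> \<sigma>. distortion_rm M (gluevar h1 h2 \<beta> \<alpha>) Y = \<mu> + \<sigma> * (h1 - 1 + \<beta>) / sqrt (\<beta> * (1 - \<beta>))"
    by (rule upper_iv[OF P AL sg ab hh])
qed


lemma case_iv_b:
  assumes P: "prob_space M" and AL: "atomless M" and sg: "\<sigma> > 0"
    and ab: "0 < \<alpha>" "\<alpha> < \<beta>" "\<beta> < 1" and hh: "0 \<le> h1" "h1 \<le> h2" "h2 < 1"
    and kd: "k1 = (h2 - h1) / (\<beta> - \<alpha>)" "k2 = h1 / (1 - \<beta>)" "k3 = (1 - h2) / \<alpha>"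
    and c: "k3 < k1" "k2 < k1" "k2 < 1"
  shows "(INF X\<in>Vset M \<mu> \<sigma>. ereal (distortion_rm M (gluevar h1 h2 \<beta> \<alpha>) X))
     = ereal (\<mu> + \<sigma> * (h1 - 1 + \<beta>) / sqrt (\<beta> * (1 - \<beta>)))"
proof (rule inf_eq_exact)
  let ?g = "gluevar h1 h2 \<beta> \<alpha>"
  obtain K where G: "\<forall>p\<in>{0..1}. 0 \<le> ?g p \<and> ?g p \<le> 1 \<and> ?g p \<le> K * p \<and> 1 - ?g p \<le> K * (1 - p)"
    using gv_basic[OF ab hh] by blast
  note B = gv_basic(2-4)[OF ab hh]
  have E1: "h1 = k2 * (1 - \<beta>)" and E2: "h2 - h1 = k1 * (\<beta> - \<alpha>)" and E3: "1 - h2 = k3 * \<alpha>"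
    unfolding kd using ab by auto
  define s where "s = (1 - h1) / \<beta>"
  have sb: "s * \<beta> = 1 - h1" unfolding s_def using ab by simp
  have F: "k2*(\<beta>-\<alpha>) \<le> k1*(\<beta>-\<alpha>)" "k3*(\<beta>-\<alpha>) \<le> k1*(\<beta>-\<alpha>)" "k2*(1-\<beta>) \<le> 1*(1-\<beta>)"
    using c ab by (intro mult_right_mono; simp)+
  have h1le: "h1 \<le> 1 - \<beta>" using E1 F by simp
  have sge: "1 \<le> s" unfolding s_def using ab h1le by (simp add: field_simps)
  have k3s: "k3 \<le> s"
  proof -
    have "k3 * \<beta> = k3 * (\<beta> - \<alpha>) + k3 * \<alpha>" by (simp add: algebra_simps)
    then have "k3 * \<beta> \<le> s * \<beta>" using sb E2 E3 F by linarith
    then show ?thesis using ab by simp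
  qed
  have k3sa: "k3 * \<alpha> \<le> s * \<alpha>" using k3s ab by (intro mult_right_mono) auto
  have L1': "\<forall>p\<in>{0..1}. 0 + k2 * p \<le> ?g p"
  proof (rule gv_line[OF ab hh])
    have "k2 * (1 - \<alpha>) = k2*(1-\<beta>) + k2*(\<beta>-\<alpha>)" by (simp add: algebra_simps)
    then show "0 + k2 * (1 - \<alpha>) \<le> h2" using E1 E2 F by linarith
  qed (use E1 c in auto)
  have L1: "\<forall>p\<in>{0..1}. ?g p - p \<ge> (k2 - 1) * p" using L1' by (auto simp: algebra_simps)
  have L2: "\<forall>p\<in>{0..1}. ?g p - p \<ge> (k2 - 1) * (1 - \<beta>) + (k2 - 1) * (p - (1 - \<beta>))"
    using L1 by (simp add: algebra_simps)
  have L3': "\<forall>p\<in>{0..1}. (1 - s) + s * p \<le> ?g p"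
  proof (rule gv_line[OF ab hh])
    show "1 - s \<le> 0" using sge by simp
    have "1 - s + s * (1 - \<beta>) = 1 - s * \<beta>" by (simp add: algebra_simps)
    then show "1 - s + s * (1 - \<beta>) \<le> h1" using sb by linarith
    have "1 - s + s * (1 - \<alpha>) = 1 - s * \<alpha>" by (simp add: algebra_simps)
    then show "1 - s + s * (1 - \<alpha>) \<le> h2" using E3 k3sa by linarith
  qed simp
  have L3: "\<forall>p\<in>{0..1}. ?g p - p \<ge> (s - 1) * (p - 1)" using L3' by (auto simp: algebra_simps)
  define u where "u = h1 - 1 + \<beta>"
  have uk: "u = (k2 - 1) * (1 - \<beta>)" unfolding u_def E1 by (simp add: algebra_simps)
  then have u0: "u < 0" using c ab by (simp add: mult_neg_pos)
  define V where "V = (1-\<beta>)*(k2-1)^2 + 0*(k2-1)^2 + \<beta>*(s-1)^2"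
  have p: "(1-\<beta>) + 0 + \<beta> = 1" by simp
  have sum: "(1-\<beta>)*(k2-1) + 0*(k2-1) + \<beta>*(s-1) = 0"
  proof -
    have "\<beta>*(s-1) = s*\<beta> - \<beta>" by (simp add: algebra_simps)
    then show ?thesis using uk sb unfolding u_def by (simp add: algebra_simps)
  qed
  have mm: "k2 - 1 \<le> k2 - 1" "k2 - 1 \<le> s - 1" using c sge by auto
  have V0: "V > 0"
  proof -
    have "(1-\<beta>)*(k2-1)^2 > 0" using c ab by simp
    moreover have "\<beta>*(s-1)^2 \<ge> 0" using ab by simp
    ultimately show ?thesis unfolding V_def by simp
  qed
  have sV: "sqrt V = - u / sqrt ((1 - \<beta>) * (1 - (1 - \<beta>)))"
  proof -
    have m2: "k2 - 1 = u / (1 - \<beta>)" unfolding uk using ab by simp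
    have m3: "s - 1 = - u / (1 - (1 - \<beta>))" using sum uk ab by (simp add: field_simps)
    have "V = (1-\<beta>)*(u / (1 - \<beta>))^2 + (1 - (1 - \<beta>))*(- u / (1 - (1 - \<beta>)))^2"
      unfolding V_def m2[symmetric] m3[symmetric] by simp
    then show ?thesis using sqrt_two_piece[of "1 - \<beta>" u] ab u0 by simp
  qed
  show "\<forall>X\<in>Vset M \<mu> \<sigma>. \<mu> + \<sigma> * (h1 - 1 + \<beta>) / sqrt (\<beta> * (1 - \<beta>)) \<le> distortion_rm M ?g X"
  proof
    fix X assume X: "X \<in> Vset M \<mu> \<sigma>"
    from core_lower[OF P X sg G B(1) p sum V_def mm V0] L1 L2 L3
    have l: "\<mu> - \<sigma> * sqrt V \<le> distortion_rm M ?g X" by (simp add: mult.commute)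
    have z: "\<sigma> * (- u) / sqrt (\<beta> * (1 - \<beta>)) + \<sigma> * u / sqrt (\<beta> * (1 - \<beta>)) = 0"
      by (simp add: add_divide_distrib[symmetric] algebra_simps)
    show "\<mu> + \<sigma> * (h1 - 1 + \<beta>) / sqrt (\<beta> * (1 - \<beta>)) \<le> distortion_rm M ?g X"
      using l sV z unfolding u_def[symmetric] by (simp add: mult.commute)
  qed
  show "\<exists>Y\<in>Vset M \<mu> \<sigma>. distortion_rm M ?g Y = \<mu> + \<sigma> * (h1 - 1 + \<beta>) / sqrt (\<beta> * (1 - \<beta>))"
    by (rule upper_iv[OF P AL sg ab hh])
qed


lemma W_pos:
  fixes p1 p2 p3 w1 w2 w3 c :: real
  assumes "p1 > 0" "p2 \<ge> 0" "p3 > 0" "w1 \<noteq> w3"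
  shows "p1*(w1 - c)^2 + p2*(w2 - c)^2 + p3*(w3 - c)^2 > 0"
proof -
  have "w1 - c \<noteq> 0 \<or> w3 - c \<noteq> 0" using assms(4) by auto
  then have "p1*(w1 - c)^2 > 0 \<or> p3*(w3 - c)^2 > 0"
  proof
    assume "w1 - c \<noteq> 0" then have "(w1 - c)^2 > 0" by simp
    then show ?thesis using assms(1) by simp
  next
    assume "w3 - c \<noteq> 0" then have "(w3 - c)^2 > 0" by simp
    then show ?thesis using assms(3) by simp
  qed
  moreover have "p1*(w1 - c)^2 \<ge> 0" "p2*(w2 - c)^2 \<ge> 0" "p3*(w3 - c)^2 \<ge> 0" using assms by auto
  ultimately show ?thesis by linarith
qed

lemma case_iii:
  assumes P: "prob_space M" and AL: "atomless M" and sg: "\<sigma> > 0"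
    and ab: "0 < \<alpha>" "\<alpha> < \<beta>" "\<beta> < 1" and hh: "0 \<le> h1" "h1 \<le> h2" "h2 < 1"
    and kd: "k1 = (h2 - h1) / (\<beta> - \<alpha>)" "k2 = h1 / (1 - \<beta>)" "k3 = (1 - h2) / \<alpha>"
    and xd: "\<xi> = (1 - h2 - \<alpha>)\<^sup>2 / \<alpha> + (h2 - h1 - \<beta> + \<alpha>)\<^sup>2 / (\<beta> - \<alpha>) + (h1 - 1 + \<beta>)\<^sup>2 / (1 - \<beta>)"
    and c: "k3 > k1" "k1 > k2"
  shows "(INF X\<in>Vset M \<mu> \<sigma>. ereal (distortion_rm M (gluevar h1 h2 \<beta> \<alpha>) X)) = ereal (\<mu> - \<sigma> * sqrt \<xi>)"
proof -
  let ?g = "gluevar h1 h2 \<beta> \<alpha>"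
  obtain K where G: "\<forall>p\<in>{0..1}. 0 \<le> ?g p \<and> ?g p \<le> 1 \<and> ?g p \<le> K * p \<and> 1 - ?g p \<le> K * (1 - p)"
    using gv_basic[OF ab hh] by blast
  note B = gv_basic(2-4)[OF ab hh]
  have E1: "h1 = k2 * (1 - \<beta>)" and E2: "h2 - h1 = k1 * (\<beta> - \<alpha>)" and E3: "1 - h2 = k3 * \<alpha>"
    unfolding kd using ab by auto
  define V where "V = (1-\<beta>)*(k2-1)^2 + (\<beta>-\<alpha>)*(k1-1)^2 + \<alpha>*(k3-1)^2"
  have S': "(1-\<beta>)*(k2-1) + (\<beta>-\<alpha>)*(k1-1) + \<alpha>*(k3-1) = 0"
  proof -
    have "k2*(1-\<beta>) + k1*(\<beta>-\<alpha>) + k3*\<alpha> = 1" using E1 E2 E3 by simp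
    then show ?thesis by (simp add: algebra_simps)
  qed
  have xiV: "\<xi> = V"
  proof -
    have a: "1 - h2 - \<alpha> = \<alpha> * (k3 - 1)" using E3 by (simp add: algebra_simps)
    have b: "h2 - h1 - \<beta> + \<alpha> = (\<beta> - \<alpha>) * (k1 - 1)" using E2 by (simp add: algebra_simps)
    have d: "h1 - 1 + \<beta> = (1 - \<beta>) * (k2 - 1)" using E1 by (simp add: algebra_simps)
    have n: "\<alpha> \<noteq> 0" "\<beta> - \<alpha> \<noteq> 0" "1 - \<beta> \<noteq> 0" using ab by auto
    show ?thesis unfolding xd a b d V_def using n by (simp add: power2_eq_square)
  qed
  have low: "\<forall>X\<in>Vset M \<mu> \<sigma>. \<mu> - \<sigma> * sqrt \<xi> \<le> distortion_rm M ?g X"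
    using lower_iii[OF P sg ab hh kd] c unfolding xiV V_def by auto
  have V0: "V > 0"
  proof -
    have "(1-\<beta>)*(1 - k2 - 0)^2 + (\<beta>-\<alpha>)*(1 - k1 - 0)^2 + \<alpha>*(1 - k3 - 0)^2 > 0"
      using ab c by (intro W_pos) auto
    then show ?thesis unfolding V_def by (simp add: power2_commute)
  qed
  define w1 where "w1 = 1 - k2"
  define w2 where "w2 = 1 - k1"
  define w3 where "w3 = 1 - k3"
  define wb where "wb x = (1-\<beta>)*w1 + (\<beta>-\<alpha>-x)*w2 + (\<alpha>+x)*w3" for x
  define W where "W x = (1-\<beta>)*(w1 - wb x)^2 + (\<beta>-\<alpha>-x)*(w2 - wb x)^2 + (\<alpha>+x)*(w3 - wb x)^2" for x
  define F where "F x = \<mu> + \<sigma> * ((h1 + (h2 - h1) * ((1 - \<alpha> - x) - (1 - \<beta>)) / (\<beta> - \<alpha>) - (1 - \<alpha> - x)) * (w2 - w3)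
       + (h1 - (1 - \<beta>)) * (w1 - w2)) / sqrt (W x)" for x
  define e where "e n = (\<beta> - \<alpha>) / real (Suc (Suc n))" for n
  have e: "0 < e n" "e n \<le> (\<beta> - \<alpha>) / 2" for n
  proof -
    show "0 < e n" unfolding e_def using ab by simp
    show "e n \<le> (\<beta> - \<alpha>) / 2" unfolding e_def using ab by (intro divide_left_mono) auto
  qed
  have Wp: "W x > 0" if "0 \<le> x" "x \<le> \<beta> - \<alpha>" for x
    unfolding W_def using that ab c unfolding w1_def w3_def by (intro W_pos) auto
  have "\<forall>n. \<exists>X\<in>Vset M \<mu> \<sigma>. distortion_rm M ?g X = F (e n)"
  proof
    fix n
    have pp: "0 \<le> 1 - \<beta>" "0 \<le> \<beta> - \<alpha> - e n" "0 \<le> \<alpha> + e n" "(1 - \<beta>) + (\<beta> - \<alpha> - e n) + (\<alpha> + e n) = 1"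
      using ab e[of n] by auto
    have ww: "w3 \<le> w2" "w2 \<le> w1" unfolding w1_def w2_def w3_def using c by auto
    have Wn: "W (e n) > 0" using Wp[of "e n"] e[of n] ab by auto
    obtain X where X: "X \<in> Vset M \<mu> \<sigma>" "distortion_rm M ?g X = \<mu> + \<sigma> * ((?g ((1 - \<beta>) + (\<beta> - \<alpha> - e n)) - ((1 - \<beta>) + (\<beta> - \<alpha> - e n)))*(w2 - w3)
       + (?g (1 - \<beta>) - (1 - \<beta>))*(w1 - w2)) / sqrt (W (e n))"
      using three_point_norm[OF P AL G B pp ww sg _ Wn] unfolding W_def wb_def by blast
    have arg: "(1 - \<beta>) + (\<beta> - \<alpha> - e n) = 1 - \<alpha> - e n" by simp
    have g1: "?g ((1 - \<beta>) + (\<beta> - \<alpha> - e n)) = h1 + (h2 - h1) * ((1 - \<alpha> - e n) - (1 - \<beta>)) / (\<beta> - \<alpha>)"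
      unfolding arg using e[of n] ab by (intro gv_mid[OF ab hh]) auto
    have g2: "?g (1 - \<beta>) = h1" using gv_mid[OF ab hh, of "1 - \<beta>"] ab by simp
    have "distortion_rm M ?g X = F (e n)" using X(2) unfolding g1 g2 F_def by simp
    then show "\<exists>X\<in>Vset M \<mu> \<sigma>. distortion_rm M ?g X = F (e n)" using X(1) by blast
  qed
  then obtain Y where Y: "\<forall>n. Y n \<in> Vset M \<mu> \<sigma>" "\<forall>n. distortion_rm M ?g (Y n) = F (e n)"
    by (rule seq_choice)
  have e0: "e \<longlonglongrightarrow> 0" unfolding e_def by (rule seq0)
  have W0: "W 0 > 0" using Wp[of 0] ab by simp
  have "(\<lambda>n. F (e n)) \<longlonglongrightarrow> F 0"
    unfolding F_def W_def wb_def using W0 ab unfolding W_def wb_def by (intro tendsto_intros e0) auto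
  moreover have "F 0 = \<mu> - \<sigma> * sqrt \<xi>"
  proof -
    have wb0: "wb 0 = 0" unfolding wb_def w1_def w2_def w3_def using S' by (simp add: algebra_simps)
    have WV: "W 0 = V" unfolding W_def wb0 V_def w1_def w2_def w3_def by (simp add: power2_commute)
    have N: "(h1 + (h2 - h1) * ((1 - \<alpha> - 0) - (1 - \<beta>)) / (\<beta> - \<alpha>) - (1 - \<alpha> - 0)) * (w2 - w3)
       + (h1 - (1 - \<beta>)) * (w1 - w2) = - V"
    proof -
      have "h1 + (h2 - h1) * ((1 - \<alpha> - 0) - (1 - \<beta>)) / (\<beta> - \<alpha>) = h2" using ab by simp
      moreover have "h2 - (1 - \<alpha> - 0) = \<alpha> * (1 - k3)" using E3 by (simp add: algebra_simps)
      moreover have "h1 - (1 - \<beta>) = (1 - \<beta>) * (k2 - 1)" using E1 by (simp add: algebra_simps)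
      moreover have "\<alpha> * (1 - k3) * (w2 - w3) + (1 - \<beta>) * (k2 - 1) * (w1 - w2) = - V"
        unfolding V_def w1_def w2_def w3_def using S' by algebra
      ultimately show ?thesis by simp
    qed
    have sV: "V / sqrt V = sqrt V" using V0 by (simp add: real_div_sqrt)
    have "\<sigma> * V / sqrt V = \<sigma> * sqrt V" using sV by (simp add: times_divide_eq_right[symmetric])
    then show ?thesis unfolding F_def N WV xiV by (simp add: minus_divide_left[symmetric])
  qed
  ultimately have "(\<lambda>n. distortion_rm M ?g (Y n)) \<longlonglongrightarrow> \<mu> - \<sigma> * sqrt \<xi>" using Y(2) by simp
  then show ?thesis using inf_eq[of "Vset M \<mu> \<sigma>" _ "distortion_rm M ?g" Y] low Y(1) by auto
qed


theorem proposition4p1: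
  fixes M :: "'a measure" and \<mu> \<sigma> \<alpha> \<beta> h1 h2 k1 k2 k3 \<xi> :: real
  assumes "prob_space M" and "atomless M"
    and "\<sigma> > 0" and "0 < \<alpha>" and "\<alpha> < \<beta>" and "\<beta> < 1"
    and "0 \<le> h1" and "h1 \<le> h2" and "h2 < 1"
    and "k1 = (h2 - h1) / (\<beta> - \<alpha>)" and "k2 = h1 / (1 - \<beta>)" and "k3 = (1 - h2) / \<alpha>"
    and "\<xi> = (1 - h2 - \<alpha>)\<^sup>2 / \<alpha> + (h2 - h1 - \<beta> + \<alpha>)\<^sup>2 / (\<beta> - \<alpha>)
             + (h1 - 1 + \<beta>)\<^sup>2 / (1 - \<beta>)"
  shows "((k2 \<ge> k1 \<and> h2 \<ge> 1 - \<alpha>) \<or> (max k2 k3 < k1 \<and> k2 \<ge> 1) \<longrightarrow>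
           (INF X\<in>Vset M \<mu> \<sigma>. ereal (distortion_rm M (gluevar h1 h2 \<beta> \<alpha>) X)) = ereal \<mu>)
       \<and> (k2 \<ge> k1 \<and> h2 < 1 - \<alpha> \<longrightarrow>
           (INF X\<in>Vset M \<mu> \<sigma>. ereal (distortion_rm M (gluevar h1 h2 \<beta> \<alpha>) X))
             = ereal (\<mu> + \<sigma> * (h2 - 1 + \<alpha>) / sqrt (\<alpha> * (1 - \<alpha>))))
       \<and> (k3 > k1 \<and> k1 > k2 \<longrightarrow>
           (INF X\<in>Vset M \<mu> \<sigma>. ereal (distortion_rm M (gluevar h1 h2 \<beta> \<alpha>) X))
             = ereal (\<mu> - \<sigma> * sqrt \<xi>))
       \<and> ((k3 = k1 \<and> k1 > k2) \<or> (max k2 k3 < k1 \<and> k2 < 1) \<longrightarrow>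
           (INF X\<in>Vset M \<mu> \<sigma>. ereal (distortion_rm M (gluevar h1 h2 \<beta> \<alpha>) X))
             = ereal (\<mu> + \<sigma> * (h1 - 1 + \<beta>) / sqrt (\<beta> * (1 - \<beta>))))"
proof -
  note P = assms(1) and AL = assms(2) and sg = assms(3)
  have ab: "0 < \<alpha>" "\<alpha> < \<beta>" "\<beta> < 1" and hh: "0 \<le> h1" "h1 \<le> h2" "h2 < 1" using assms by auto
  have kd: "k1 = (h2 - h1) / (\<beta> - \<alpha>)" "k2 = h1 / (1 - \<beta>)" "k3 = (1 - h2) / \<alpha>" using assms by auto
  have E1: "h1 = k2 * (1 - \<beta>)" and E2: "h2 - h1 = k1 * (\<beta> - \<alpha>)" and E3: "1 - h2 = k3 * \<alpha>"
    unfolding kd using ab by auto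
  show ?thesis
  proof (intro conjI impI)
    assume A: "(k2 \<ge> k1 \<and> h2 \<ge> 1 - \<alpha>) \<or> (max k2 k3 < k1 \<and> k2 \<ge> 1)"
    have c: "1 - \<beta> \<le> h1 \<and> 1 - \<alpha> \<le> h2"
      using A
    proof
      assume a: "k2 \<ge> k1 \<and> h2 \<ge> 1 - \<alpha>"
      have "k1 * ((\<beta> - \<alpha>) * (1 - \<beta>)) \<le> k2 * ((\<beta> - \<alpha>) * (1 - \<beta>))"
        using a ab by (intro mult_right_mono) auto
      moreover have "k1 * ((\<beta> - \<alpha>) * (1 - \<beta>)) = (h2 - h1) * (1 - \<beta>)" by (metis E2 mult.assoc)
      moreover have "k2 * ((\<beta> - \<alpha>) * (1 - \<beta>)) = h1 * (\<beta> - \<alpha>)" by (metis E1 mult.assoc mult.commute)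
      ultimately have "(h2 - h1) * (1 - \<beta>) \<le> h1 * (\<beta> - \<alpha>)" by simp
      then have D: "h2 * (1 - \<beta>) \<le> h1 * (1 - \<alpha>)" by (simp add: algebra_simps)
      have "(1 - \<alpha>) * (1 - \<beta>) \<le> h2 * (1 - \<beta>)" using a ab by (intro mult_right_mono) auto
      then have "(1 - \<beta>) * (1 - \<alpha>) \<le> h1 * (1 - \<alpha>)" using D by (simp add: mult.commute)
      then have "1 - \<beta> \<le> h1" using ab by simp
      then show ?thesis using a by simp
    next
      assume a: "max k2 k3 < k1 \<and> k2 \<ge> 1"
      have h1b: "1 - \<beta> \<le> h1" using E1 a ab by (simp add: mult_le_cancel_right1)
      have "1 - \<alpha> \<le> h2"
      proof (rule ccontr)
        assume "\<not> 1 - \<alpha> \<le> h2"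
        then have "k3 * \<alpha> > 1 * \<alpha>" using E3 by simp
        then have "k3 > 1" using ab by simp
        moreover have "k1 * (\<beta> - \<alpha>) < 1 * (\<beta> - \<alpha>)" using E2 h1b \<open>\<not> 1 - \<alpha> \<le> h2\<close> by simp
        then have "k1 < 1" using ab by simp
        ultimately show False using a by simp
      qed
      then show ?thesis using h1b by simp
    qed
    show "(INF X\<in>Vset M \<mu> \<sigma>. ereal (distortion_rm M (gluevar h1 h2 \<beta> \<alpha>) X)) = ereal \<mu>"
      using case_i[OF P AL sg ab hh] c by blast
  next
    assume A: "k2 \<ge> k1 \<and> h2 < 1 - \<alpha>"
    then show "(INF X\<in>Vset M \<mu> \<sigma>. ereal (distortion_rm M (gluevar h1 h2 \<beta> \<alpha>) X))
             = ereal (\<mu> + \<sigma> * (h2 - 1 + \<alpha>) / sqrt (\<alpha> * (1 - \<alpha>)))"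
      using case_ii[OF P AL sg ab hh] kd by simp
  next
    assume A: "k3 > k1 \<and> k1 > k2"
    then show "(INF X\<in>Vset M \<mu> \<sigma>. ereal (distortion_rm M (gluevar h1 h2 \<beta> \<alpha>) X)) = ereal (\<mu> - \<sigma> * sqrt \<xi>)"
      using case_iii[OF P AL sg ab hh kd assms(13)] by blast
  next
    assume A: "(k3 = k1 \<and> k1 > k2) \<or> (max k2 k3 < k1 \<and> k2 < 1)"
    then show "(INF X\<in>Vset M \<mu> \<sigma>. ereal (distortion_rm M (gluevar h1 h2 \<beta> \<alpha>) X))
             = ereal (\<mu> + \<sigma> * (h1 - 1 + \<beta>) / sqrt (\<beta> * (1 - \<beta>)))"
    proof
      assume "k3 = k1 \<and> k1 > k2"
      then show ?thesis using case_iv_a[OF P AL sg ab hh kd] by blast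
    next
      assume "max k2 k3 < k1 \<and> k2 < 1"
      then show ?thesis using case_iv_b[OF P AL sg ab hh kd] by simp
    qed
  qed
qed


end
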